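(* Let $\mathbb{K}$ be a valued field, $E$, $F$, $H$ topological $\mathbb{K}$-vector spaces, $U\subseteq E$ and $V\subseteq F$ subsets with dense interior, $k\in\mathbb{N}_0$, $\sigma\in\,]0,1]$, $\tau>0$, $f\colon U\to V$ a $C^{k,\sigma}_{BGN}$-map (as a map into $F$) and $g\colon V\to H$ a $C^{k,\tau}_{BGN}$-map. Then $g\circ f\colon U\to H$ is $C^{k,\sigma\cdot\tau}_{BGN}$.
   Context: Valued field: field with absolute value defining a non-discrete topology; vector spaces Hausdorff. $C^k_{BGN}$: for $W\subseteq E$ with dense interior, $W^{[1]}=\{(x,y,t)\in W\times E\times\mathbb{K}:x+ty\in W\}$, $W^{]1[}$ its subset with $t\ne0$, $g^{]1[}(x,y,t)=(g(x+ty)-g(x))/t$; $g$ is $C^0_{BGN}$ if continuous, $C^1_{BGN}$ if continuous and $g^{]1[}$ extends continuously to $g^{[1]}$ on $W^{[1]}$, $C^k_{BGN}$ if $C^1_{BGN}$ with $g^{[1]}$ $C^{k-1}_{BGN}$; $g^{[k]}=(g^{[1]})^{[k-1]}$, $g^{[0]}=g$. Gauge: $q\colon E\to[0,\infty[$ with $q(tx)=|t|q(x)$ and each $\{q<r\}$ a $0$-neighbourhood. $g\colon W\to F$ is $C^{0,\sigma}$ if for every $x_0\in W$ and gauge $q$ on $F$ there exist a gauge $p$ on $E$ and a neighbourhood $W_0$ of $x_0$ in $W$ with $q(g(y)-g(x))\le p(y-x)^\sigma$ for $x,y\in W_0$. $C^{k,\sigma}_{BGN}$: $C^k_{BGN}$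 and each $g^{[j]}$, $j\le k$, is $C^{0,\sigma}$. *)

theory Defs
  imports "HOL-Analysis.Analysis"
begin

definition valued_field :: "('k::{field,topological_space} \<Rightarrow> real) \<Rightarrow> bool" where
  "valued_field abv \<longleftrightarrow>
     (\<forall>x. 0 \<le> abv x) \<and> (\<forall>x. abv x = 0 \<longleftrightarrow> x = 0) \<and>
     (\<forall>x y. abv (x * y) = abv x * abv y) \<and> (\<forall>x y. abv (x + y) \<le> abv x + abv y) \<and>
     (\<forall>S::'k set. open S \<longleftrightarrow> (\<forall>x\<in>S. \<exists>e>0. \<forall>y. abv (y - x) < e \<longrightarrow> y \<in> S)) \<and>
     \<not> (\<forall>x::'k. open {x})"

definition tvs :: "('k::{field,topological_space} \<Rightarrow> 'e::{ab_group_add,t2_space} \<Rightarrow> 'e) \<Rightarrow> bool" where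
  "tvs sc \<longleftrightarrow> vector_space sc \<and>
     continuous_on UNIV (\<lambda>(x::'e, y). x + y) \<and>
     continuous_on UNIV (\<lambda>(t::'k, x::'e). sc t x)"

definition gauge :: "('k \<Rightarrow> real) \<Rightarrow> ('k \<Rightarrow> 'f::{ab_group_add,topological_space} \<Rightarrow> 'f)
    \<Rightarrow> ('f \<Rightarrow> real) \<Rightarrow> bool" where
  "gauge abv sc q \<longleftrightarrow> (\<forall>x. 0 \<le> q x) \<and> (\<forall>t x. q (sc t x) = abv t * q x) \<and>
     (\<forall>r>0. \<exists>N. open N \<and> 0 \<in> N \<and> N \<subseteq> {x. q x < r})"

text \<open>E^[j] = E^[j-1] x E^[j-1] x K is represented by a pair of coordinate functions:
the E-coordinates are indexed by boolean lists of length j (the path of x/y-choices),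
the K-coordinates by boolean lists of length < j (the node where the scalar t sits).
All other coordinates are 0. The topology is the product topology, the linear
structure is componentwise; this is isomorphic (as topological vector space) to the
iterated product.\<close>
type_synonym ('e,'k) code = "(bool list \<Rightarrow> 'e) \<times> (bool list \<Rightarrow> 'k)"

definition shape :: "nat \<Rightarrow> ('e::zero,'k::zero) code set" where
  "shape j = {(a,b). (\<forall>p. length p \<noteq> j \<longrightarrow> a p = 0) \<and> (\<forall>p. \<not> length p < j \<longrightarrow> b p = 0)}"

definition cadd :: "('e::plus,'k::plus) code \<Rightarrow> ('e,'k) code \<Rightarrow> ('e,'k) code" where
  "cadd x y = (\<lambda>p. fst x p + fst y p, \<lambda>p. snd x p + snd y p)"

definition cdiff :: "('e::minus,'k::minus) code \<Rightarrow> ('e,'k) code \<Rightarrow> ('e,'k) code" where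
  "cdiff x y = (\<lambda>p. fst x p - fst y p, \<lambda>p. snd x p - snd y p)"

definition cscale :: "('k::times \<Rightarrow> 'e \<Rightarrow> 'e) \<Rightarrow> 'k \<Rightarrow> ('e,'k) code \<Rightarrow> ('e,'k) code" where
  "cscale sc t x = (\<lambda>p. sc t (fst x p), \<lambda>p. t * snd x p)"

text \<open>The triple (x,y,t) in E^[j] x E^[j] x K, as an element of E^[j+1].\<close>
definition join :: "('e::zero,'k) code \<Rightarrow> ('e,'k) code \<Rightarrow> 'k \<Rightarrow> ('e,'k) code" where
  "join x y t =
     (\<lambda>p. case p of [] \<Rightarrow> 0 | False # q \<Rightarrow> fst x q | True # q \<Rightarrow> fst y q,
      \<lambda>p. case p of [] \<Rightarrow> t | False # q \<Rightarrow> snd x q | True # q \<Rightarrow> snd y q)"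

definition W1 :: "('k::field \<Rightarrow> 'e::ab_group_add \<Rightarrow> 'e) \<Rightarrow> nat \<Rightarrow> ('e,'k) code set \<Rightarrow> ('e,'k) code set" where
  "W1 sc j W = {join x y t | x y t. x \<in> W \<and> y \<in> shape j \<and> cadd x (cscale sc t y) \<in> W}"

definition code_gauge :: "('k::{field,topological_space} \<Rightarrow> real) \<Rightarrow> ('k \<Rightarrow> 'e::{ab_group_add,topological_space} \<Rightarrow> 'e)
    \<Rightarrow> nat \<Rightarrow> (('e,'k) code \<Rightarrow> real) \<Rightarrow> bool" where
  "code_gauge abv sc j p \<longleftrightarrow> (\<forall>x\<in>shape j. 0 \<le> p x) \<and>
     (\<forall>t. \<forall>x\<in>shape j. p (cscale sc t x) = abv t * p x) \<and>
     (\<forall>r>0. \<exists>N. open N \<and> (\<lambda>_. 0, \<lambda>_. 0) \<in> N \<and> shape j \<inter> N \<subseteq> {x. p x < r})"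

definition holder_code :: "('k::{field,topological_space} \<Rightarrow> real) \<Rightarrow> ('k \<Rightarrow> 'e::{ab_group_add,topological_space} \<Rightarrow> 'e)
    \<Rightarrow> ('k \<Rightarrow> 'f::{ab_group_add,topological_space} \<Rightarrow> 'f) \<Rightarrow> real \<Rightarrow> nat
    \<Rightarrow> ('e,'k) code set \<Rightarrow> (('e,'k) code \<Rightarrow> 'f) \<Rightarrow> bool" where
  "holder_code abv scE scF \<sigma> j W G \<longleftrightarrow>
     (\<forall>x0\<in>W. \<forall>q. gauge abv scF q \<longrightarrow>
        (\<exists>p. code_gauge abv scE j p \<and>
           (\<exists>N. open N \<and> x0 \<in> N \<and>
              (\<forall>x\<in>W \<inter> N. \<forall>y\<in>W \<inter> N. q (G y - G x) \<le> p (cdiff y x) powr \<sigma>))))"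

text \<open>BGN k j W G: the map G : W \<rightarrow> F (W \<subseteq> E^[j]) is C^{k,\<sigma>}_BGN; the existentially
quantified G1 is the continuous extension G^[1] of the difference quotient G^]1[.\<close>
fun BGN :: "('k::{field,topological_space} \<Rightarrow> real) \<Rightarrow> ('k \<Rightarrow> 'e::{ab_group_add,topological_space} \<Rightarrow> 'e)
    \<Rightarrow> ('k \<Rightarrow> 'f::{ab_group_add,topological_space} \<Rightarrow> 'f) \<Rightarrow> real \<Rightarrow> nat \<Rightarrow> nat
    \<Rightarrow> ('e,'k) code set \<Rightarrow> (('e,'k) code \<Rightarrow> 'f) \<Rightarrow> bool" where
  "BGN abv scE scF \<sigma> 0 j W G \<longleftrightarrow>
     continuous_on W G \<and> holder_code abv scE scF \<sigma> j W G"
| "BGN abv scE scF \<sigma> (Suc k) j W G \<longleftrightarrow>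
     continuous_on W G \<and> holder_code abv scE scF \<sigma> j W G \<and>
     (\<exists>G1. continuous_on (W1 scE j W) G1 \<and>
        (\<forall>x y t. x \<in> W \<longrightarrow> y \<in> shape j \<longrightarrow> t \<noteq> 0 \<longrightarrow> cadd x (cscale scE t y) \<in> W \<longrightarrow>
           G1 (join x y t) = scF (inverse t) (G (cadd x (cscale scE t y)) - G x)) \<and>
        BGN abv scE scF \<sigma> k (Suc j) (W1 scE j W) G1)"

definition lift0 :: "'e::zero \<Rightarrow> ('e,'k::zero) code" where
  "lift0 x = (\<lambda>p. if p = [] then x else 0, \<lambda>p. 0)"

definition Ck_sigma_BGN :: "('k::{field,topological_space} \<Rightarrow> real) \<Rightarrow> ('k \<Rightarrow> 'e::{ab_group_add,topological_space} \<Rightarrow> 'e)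
    \<Rightarrow> ('k \<Rightarrow> 'f::{ab_group_add,topological_space} \<Rightarrow> 'f) \<Rightarrow> nat \<Rightarrow> real \<Rightarrow> 'e set \<Rightarrow> ('e \<Rightarrow> 'f) \<Rightarrow> bool" where
  "Ck_sigma_BGN abv scE scF k \<sigma> W g \<longleftrightarrow>
     BGN abv scE scF \<sigma> k 0 ((lift0 :: 'e \<Rightarrow> ('e,'k) code) ` W) (\<lambda>c. g (fst c []))"

end

theory Submission
  imports Defs "HOL-Library.Function_Algebras"
begin


section \<open>Valued field facts\<close>

lemma vf_props:
  fixes abv :: "'k::{field,topological_space} \<Rightarrow> real"
  assumes "valued_field abv"
  shows "\<And>x. 0 \<le> abv x" "\<And>x. abv x = 0 \<longleftrightarrow> x = 0"
    "\<And>x y. abv (x * y) = abv x * abv y" "\<And>x y. abv (x + y) \<le> abv x + abv y"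
    "\<And>S. open S \<longleftrightarrow> (\<forall>x\<in>S. \<exists>e>0. \<forall>y. abv (y - x) < e \<longrightarrow> y \<in> S)"
    "\<not> (\<forall>x::'k. open {x})"
  using assms unfolding valued_field_def by auto

lemma vf_zero: fixes abv :: "'k::{field,topological_space} \<Rightarrow> real" assumes "valued_field abv" shows "abv 0 = 0"
  using vf_props(2)[OF assms] by simp

lemma vf_one: assumes "valued_field abv" shows "abv 1 = 1"
proof -
  have "abv 1 = abv 1 * abv 1" using vf_props(3)[OF assms, of 1 1] by simp
  moreover have "abv 1 \<noteq> 0" using vf_props(2)[OF assms, of 1] by simp
  ultimately show ?thesis by (metis mult_cancel_left2)
qed

lemma vf_minus: assumes "valued_field abv" shows "abv (- x) = abv x"
proof -
  have "abv (-1) * abv (-1) = 1" using vf_props(3)[OF assms, of "-1" "-1"] vf_one[OF assms] by simp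
  moreover have "abv (-1) \<ge> 0" using vf_props(1)[OF assms] by simp
  moreover have "(abv (-1) - 1) * (abv (-1) + 1) = abv (-1) * abv (-1) - 1" by (simp add: algebra_simps)
  ultimately have "abv (-1) = 1" by simp
  then show ?thesis using vf_props(3)[OF assms, of "-1" x] by simp
qed

lemma vf_sym: assumes "valued_field abv" shows "abv (x - y) = abv (y - x)"
  using vf_minus[OF assms, of "y - x"] by simp

lemma vf_inverse: assumes "valued_field abv" "t \<noteq> 0" shows "abv (inverse t) = inverse (abv t)"
proof -
  have "abv (inverse t) * abv t = 1" using vf_props(3)[OF assms(1), of "inverse t" t] vf_one[OF assms(1)] assms(2) by simp
  then show ?thesis by (metis inverse_unique mult.commute)
qed

lemma vf_small: fixes abv :: "'k::{field,topological_space} \<Rightarrow> real" assumes "valued_field abv" "e > 0" shows "\<exists>t. t \<noteq> 0 \<and> abv t < e"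
proof -
  obtain x :: 'k where "\<not> open {x}" using vf_props(6)[OF assms(1)] by auto
  then have "\<not> (\<exists>e>0. \<forall>y. abv (y - x) < e \<longrightarrow> y \<in> {x})" using vf_props(5)[OF assms(1), of "{x}"] by auto
  then obtain y where "abv (y - x) < e" "y \<noteq> x" using assms(2) by auto
  then show ?thesis by (intro exI[of _ "y - x"]) auto
qed

lemma vf_triangle: assumes "valued_field abv" shows "abv (x - z) \<le> abv (x - y) + abv (y - z)"
  using vf_props(4)[OF assms, of "x - y" "y - z"] by simp

lemma vf_ball_open: assumes "valued_field abv" shows "open {y. abv (y - a) < e}"
proof -
  have "\<exists>e'>0. \<forall>y. abv (y - x) < e' \<longrightarrow> abv (y - a) < e'' " if "abv (x - a) < e''" "e'' = e" for x e''
  proof (intro exI[of _ "e - abv (x - a)"] conjI allI impI)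
    show "0 < e - abv (x - a)" using that by simp
    fix y assume "abv (y - x) < e - abv (x - a)"
    then show "abv (y - a) < e''" using vf_triangle[OF assms, of y a x] that by simp
  qed
  then show ?thesis unfolding vf_props(5)[OF assms] by auto
qed

lemma vf_contI:
  assumes vf: "valued_field abv"
    and H: "\<And>x e. e > 0 \<Longrightarrow> \<exists>A. open A \<and> x \<in> A \<and> (\<forall>y\<in>A. abv (f y - f x) < e)"
  shows "continuous_on UNIV (f :: 'a::topological_space \<Rightarrow> 'k::{field,topological_space})"
  unfolding continuous_on_open_vimage[OF open_UNIV]
proof (intro allI impI)
  fix B :: "'k set" assume "open B"
  show "open (f -` B \<inter> UNIV)"
  proof (rule open_subopen[THEN iffD2], intro ballI)
    fix x assume "x \<in> f -` B \<inter> UNIV"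
    then have "f x \<in> B" by simp
    then obtain e where e: "e > 0" "\<forall>y. abv (y - f x) < e \<longrightarrow> y \<in> B"
      using \<open>open B\<close> vf_props(5)[OF vf] by blast
    obtain A where "open A" "x \<in> A" "\<forall>y\<in>A. abv (f y - f x) < e" using H[OF e(1)] by blast
    then show "\<exists>T. open T \<and> x \<in> T \<and> T \<subseteq> f -` B \<inter> UNIV" using e by (intro exI[of _ A]) auto
  qed
qed

lemma vf_add_cont: fixes abv :: "'k::{field,topological_space} \<Rightarrow> real" assumes vf: "valued_field abv"
  shows "continuous_on UNIV (\<lambda>(x,y). x + y :: 'k::{field,topological_space})"
proof (rule vf_contI[OF vf])
  fix z :: "'k \<times> 'k" and e :: real assume "e > 0"
  obtain a b where z: "z = (a,b)" by (cases z)
  let ?A = "{x. abv (x - a) < e/2} \<times> {y. abv (y - b) < e/2}"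
  have "open ?A" by (intro open_Times vf_ball_open[OF vf])
  moreover have "z \<in> ?A" using z \<open>e>0\<close> vf_zero[OF vf] by simp
  moreover have "\<forall>w\<in>?A. abv ((\<lambda>(x,y). x + y) w - (\<lambda>(x,y). x + y) z) < e"
  proof
    fix w assume "w \<in> ?A"
    then obtain x y where w: "w = (x,y)" "abv (x - a) < e/2" "abv (y - b) < e/2" by auto
    have "abv ((x - a) + (y - b)) \<le> abv (x - a) + abv (y - b)" using vf_props(4)[OF vf] by blast
    then show "abv ((\<lambda>(x,y). x + y) w - (\<lambda>(x,y). x + y) z) < e" using w z
      by (simp add: algebra_simps)
  qed
  ultimately show "\<exists>A. open A \<and> z \<in> A \<and> (\<forall>y\<in>A. abv ((\<lambda>(x,y). x + y) y - (\<lambda>(x,y). x + y) z) < e)"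
    by blast
qed

lemma vf_mult_cont: fixes abv :: "'k::{field,topological_space} \<Rightarrow> real" assumes vf: "valued_field abv"
  shows "continuous_on UNIV (\<lambda>(x,y). x * y :: 'k::{field,topological_space})"
proof (rule vf_contI[OF vf])
  fix z :: "'k \<times> 'k" and e :: real assume "e > 0"
  obtain a b where z: "z = (a,b)" by (cases z)
  define d where "d = min 1 (e / (2 * (abv a + abv b + 1)))"
  have ab0: "abv a \<ge> 0" "abv b \<ge> 0" using vf_props(1)[OF vf] by auto
  have d0: "d > 0" unfolding d_def using \<open>e>0\<close> ab0 by simp
  have d1: "d \<le> 1" unfolding d_def by simp
  have d2: "d * (abv a + abv b + 1) < e"
  proof -
    have "d * (abv a + abv b + 1) \<le> (e / (2 * (abv a + abv b + 1))) * (abv a + abv b + 1)"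
      unfolding d_def using ab0 by (intro mult_right_mono) auto
    also have "\<dots> = e / 2" using ab0 by (simp add: field_simps)
    finally show ?thesis using \<open>e>0\<close> by simp
  qed
  let ?A = "{x. abv (x - a) < d} \<times> {y. abv (y - b) < d}"
  have "open ?A" by (intro open_Times vf_ball_open[OF vf])
  moreover have "z \<in> ?A" using z d0 vf_zero[OF vf] by simp
  moreover have "\<forall>w\<in>?A. abv ((\<lambda>(x,y). x * y) w - (\<lambda>(x,y). x * y) z) < e"
  proof
    fix w assume "w \<in> ?A"
    then obtain x y where w: "w = (x,y)" "abv (x - a) < d" "abv (y - b) < d" by auto
    have eq: "x * y - a * b = x * (y - b) + (x - a) * b" by (simp add: algebra_simps)
    have "abv x \<le> abv (x - a) + abv a" using vf_props(4)[OF vf, of "x - a" a] by simp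
    then have xb: "abv x \<le> abv a + d" using w by simp
    have "abv (x * y - a * b) \<le> abv x * abv (y - b) + abv (x - a) * abv b"
      using vf_props(4)[OF vf, of "x * (y - b)" "(x - a) * b"] unfolding eq vf_props(3)[OF vf] .
    also have "\<dots> \<le> (abv a + d) * d + d * abv b"
      using xb w ab0 d0 vf_props(1)[OF vf] by (intro add_mono mult_mono) auto
    also have "\<dots> \<le> d * (abv a + abv b + 1)" using d1 d0 by (simp add: algebra_simps)
    finally show "abv ((\<lambda>(x,y). x * y) w - (\<lambda>(x,y). x * y) z) < e" using w z d2 by simp
  qed
  ultimately show "\<exists>A. open A \<and> z \<in> A \<and> (\<forall>y\<in>A. abv ((\<lambda>(x,y). x * y) y - (\<lambda>(x,y). x * y) z) < e)"
    by blast
qed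



lemma vs:
  assumes "vector_space sc"
  shows "sc t 0 = 0" "sc 0 x = 0" "sc t (x + y) = sc t x + sc t y"
    "sc t (x - y) = sc t x - sc t y" "sc a (sc b x) = sc (a * b) x" "sc 1 x = x"
    "sc t (- x) = - sc t x" "sc (a + b) x = sc a x + sc b x"
proof -
  interpret vector_space sc by fact
  show "sc t 0 = 0" "sc 0 x = 0" "sc t (x + y) = sc t x + sc t y"
    "sc t (x - y) = sc t x - sc t y" "sc a (sc b x) = sc (a * b) x" "sc 1 x = x"
    "sc t (- x) = - sc t x" "sc (a + b) x = sc a x + sc b x"
    by (simp_all add: scale_right_diff_distrib scale_right_distrib scale_left_distrib)
qed

lemma tvs_vs: "tvs sc \<Longrightarrow> vector_space sc" unfolding tvs_def by simp

lemma tvs_add: "tvs (sc :: 'k::{field,topological_space} \<Rightarrow> 'e::{ab_group_add,t2_space} \<Rightarrow> 'e) \<Longrightarrow> continuous_on UNIV (\<lambda>z::'e::{ab_group_add,t2_space} \<times> 'e. fst z + snd z)"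
  unfolding tvs_def by (simp add: case_prod_unfold)

lemma tvs_scale: "tvs (sc :: 'k::{field,topological_space} \<Rightarrow> 'e::{ab_group_add,t2_space} \<Rightarrow> 'e)
  \<Longrightarrow> continuous_on UNIV (\<lambda>z::'k \<times> 'e. sc (fst z) (snd z))"
  unfolding tvs_def by (simp add: case_prod_unfold)

definition lin :: "('k \<Rightarrow> 'a::plus \<Rightarrow> 'a) \<Rightarrow> ('k \<Rightarrow> 'b::plus \<Rightarrow> 'b) \<Rightarrow> ('a \<Rightarrow> 'b) \<Rightarrow> bool" where
  "lin scA scB L \<longleftrightarrow> (\<forall>x y. L (x + y) = L x + L y) \<and> (\<forall>t x. L (scA t x) = scB t (L x))"

lemma lin_add: "lin scA scB L \<Longrightarrow> L (x + y) = L x + L y" unfolding lin_def by simp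
lemma lin_scale: "lin scA scB L \<Longrightarrow> L (scA t x) = scB t (L x)" unfolding lin_def by simp
lemma lin_zero: "lin scA scB (L :: 'a::ab_group_add \<Rightarrow> 'b::ab_group_add) \<Longrightarrow> L 0 = 0"
  using lin_add[of scA scB L 0 0] by simp
lemma lin_diff: "lin scA scB (L :: 'a::ab_group_add \<Rightarrow> 'b::ab_group_add) \<Longrightarrow> L (x - y) = L x - L y"
  using lin_add[of scA scB L "x - y" y] by (simp add: algebra_simps)

section \<open>Code algebra\<close>

lemma code_eqI: "(\<And>p. fst a p = fst b p) \<Longrightarrow> (\<And>p. snd a p = snd b p) \<Longrightarrow> a = (b :: ('e,'k) code)"
  by (simp add: prod_eq_iff fun_eq_iff)

lemma cadd_eq: "cadd x y = x + y" unfolding cadd_def by (rule code_eqI) auto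
lemma cdiff_eq: "cdiff x y = x - y" unfolding cdiff_def by (rule code_eqI) auto

lemma cscale_simps [simp]: "fst (cscale sc t x) p = sc t (fst x p)" "snd (cscale sc t x) p = t * snd x p"
  unfolding cscale_def by auto

lemma code_apply_simps [simp]:
  "fst (x + y) p = fst x p + fst y p" "snd (x + y) p = snd x p + snd y p"
  "fst (x - y) p = fst x p - fst y p" "snd (x - y) p = snd x p - snd y p"
  "fst (0 :: ('e::zero,'k::zero) code) p = 0" "snd (0 :: ('e::zero,'k::zero) code) p = 0"
  "fst (- x) p = - fst x p" "snd (- x) p = - snd x p"
  by auto

lemma vs_cscale: assumes "vector_space sc" shows "vector_space (cscale sc)"
  unfolding vector_space_def module_def
  using vs[OF assms] by (auto intro!: code_eqI simp: algebra_simps)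

lemma cscale_zero: "vector_space sc \<Longrightarrow> cscale sc t 0 = 0"
  using vs[of sc] by (auto intro!: code_eqI)

definition cleft :: "('e,'k) code \<Rightarrow> ('e,'k) code" where
  "cleft z = (\<lambda>q. fst z (False # q), \<lambda>q. snd z (False # q))"
definition cright :: "('e,'k) code \<Rightarrow> ('e,'k) code" where
  "cright z = (\<lambda>q. fst z (True # q), \<lambda>q. snd z (True # q))"
definition proj :: "nat \<Rightarrow> ('e::zero,'k::zero) code \<Rightarrow> ('e,'k) code" where
  "proj j z = (\<lambda>p. if length p = j then fst z p else 0, \<lambda>p. if length p < j then snd z p else 0)"

lemma join_simps [simp]:
  "fst (join x y t) [] = 0" "snd (join x y t) [] = t"
  "fst (join x y t) (False # q) = fst x q" "snd (join x y t) (False # q) = snd x q"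
  "fst (join x y t) (True # q) = fst y q" "snd (join x y t) (True # q) = snd y q"
  unfolding join_def by auto

lemma cleft_simps [simp]: "fst (cleft z) q = fst z (False # q)" "snd (cleft z) q = snd z (False # q)"
  unfolding cleft_def by auto
lemma cright_simps [simp]: "fst (cright z) q = fst z (True # q)" "snd (cright z) q = snd z (True # q)"
  unfolding cright_def by auto
lemma proj_simps [simp]: "fst (proj j z) p = (if length p = j then fst z p else 0)"
  "snd (proj j z) p = (if length p < j then snd z p else 0)"
  unfolding proj_def by auto

lemma cleft_join [simp]: "cleft (join x y t) = x" by (rule code_eqI) auto
lemma cright_join [simp]: "cright (join x y t) = y" by (rule code_eqI) auto

lemma join_eqI: "(\<And>p. fst z p = fst (join x y t) p) \<Longrightarrow> (\<And>p. snd z p = snd (join x y t) p) \<Longrightarrow> z = join x y t"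
  by (rule code_eqI)

lemma code_list_cases: "P [] \<Longrightarrow> (\<And>q. P (False # q)) \<Longrightarrow> (\<And>q. P (True # q)) \<Longrightarrow> P p"
  by (metis (full_types) list.exhaust)

lemma join_add: "join (x + x') (y + y') (t + t') = (join x y t + join x' y' (t' :: 'k::ring) :: ('e::ab_group_add,'k) code)"
  by (rule code_eqI; rule code_list_cases; simp)

lemma join_diff: "join (x - x') (y - y') (t - t') = (join x y t - join x' y' (t' :: 'k::ring) :: ('e::ab_group_add,'k) code)"
  by (rule code_eqI; rule code_list_cases; simp)

lemma join_zero: "join 0 0 (0::'k::ring) = (0 :: ('e::ab_group_add,'k) code)"
  by (rule code_eqI; rule code_list_cases; simp)

lemma join_cscale: "vector_space sc \<Longrightarrow> cscale sc s (join x y t) = join (cscale sc s x) (cscale sc s y) (s * t)"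
  by (rule code_eqI; rule code_list_cases; simp add: vs)

lemma join_split: "join a b c = (join a 0 0 + join 0 b 0 + join 0 0 (c :: 'k::ring) :: ('e::ab_group_add,'k) code)"
  by (rule code_eqI; rule code_list_cases; simp)

lemma shape_iff: "z \<in> shape j \<longleftrightarrow> (\<forall>p. length p \<noteq> j \<longrightarrow> fst z p = 0) \<and> (\<forall>p. \<not> length p < j \<longrightarrow> snd z p = 0)"
  unfolding shape_def by (cases z) auto

lemma shape_zero [simp]: "0 \<in> shape j" by (simp add: shape_iff)
lemma shape_add: "(x :: ('e::ab_group_add,'k::ab_group_add) code) \<in> shape j \<Longrightarrow> y \<in> shape j \<Longrightarrow> x + y \<in> shape j" by (simp add: shape_iff)
lemma shape_diff: "(x :: ('e::ab_group_add,'k::ab_group_add) code) \<in> shape j \<Longrightarrow> y \<in> shape j \<Longrightarrow> x - y \<in> shape j" by (simp add: shape_iff)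
lemma shape_cscale: "vector_space sc \<Longrightarrow> x \<in> shape j \<Longrightarrow> cscale sc t x \<in> shape j"
  by (simp add: shape_iff vs)
lemma shape_proj: "proj j z \<in> shape j" by (simp add: shape_iff)
lemma proj_id: "z \<in> shape j \<Longrightarrow> proj j z = z" by (rule code_eqI) (auto simp: shape_iff)
lemma shape_join: assumes "x \<in> shape j" "y \<in> shape j" shows "join x y t \<in> shape (Suc j)"
  unfolding shape_iff
proof (intro conjI allI)
  fix p
  show "length p \<noteq> Suc j \<longrightarrow> fst (join x y t) p = 0"
    by (rule code_list_cases[of "\<lambda>p. length p \<noteq> Suc j \<longrightarrow> fst (join x y t) p = 0" p])
      (use assms in \<open>auto simp: shape_iff\<close>)
  show "\<not> length p < Suc j \<longrightarrow> snd (join x y t) p = 0"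
    by (rule code_list_cases[of "\<lambda>p. \<not> length p < Suc j \<longrightarrow> snd (join x y t) p = 0" p])
      (use assms in \<open>auto simp: shape_iff\<close>)
qed
lemma shape_cleft: "z \<in> shape (Suc j) \<Longrightarrow> cleft z \<in> shape j" by (simp add: shape_iff)
lemma shape_cright: "z \<in> shape (Suc j) \<Longrightarrow> cright z \<in> shape j" by (simp add: shape_iff)
lemma shape_join_decomp: "z \<in> shape (Suc j) \<Longrightarrow> z = join (cleft z) (cright z) (snd z [])"
  by (rule code_eqI; rule code_list_cases) (auto simp: shape_iff)
lemma lift0_shape: "lift0 x \<in> shape 0" by (simp add: shape_iff lift0_def)

lemma W1_shape: "W \<subseteq> shape j \<Longrightarrow> W1 sc j W \<subseteq> shape (Suc j)"
  unfolding W1_def by (auto intro!: shape_join)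

lemma W1_mem: "z \<in> W1 sc j W \<Longrightarrow> \<exists>x y t. z = join x y t \<and> x \<in> W \<and> y \<in> shape j \<and> x + cscale sc t y \<in> W"
  unfolding W1_def cadd_eq by blast

lemma W1_memI: "x \<in> W \<Longrightarrow> y \<in> shape j \<Longrightarrow> x + cscale sc t y \<in> W \<Longrightarrow> join x y t \<in> W1 sc j W"
  unfolding W1_def cadd_eq by blast

lemma lin_cleft: "lin (cscale sc) (cscale sc) cleft"
  unfolding lin_def by (auto intro!: code_eqI)
lemma lin_cright: "lin (cscale sc) (cscale sc) cright"
  unfolding lin_def by (auto intro!: code_eqI)
lemma lin_proj: "vector_space sc \<Longrightarrow> lin (cscale sc) (cscale sc) (proj j)"
  unfolding lin_def by (auto intro!: code_eqI simp: vs)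
lemma lin_lift0: "vector_space sc \<Longrightarrow> lin sc (cscale sc) lift0"
  unfolding lin_def lift0_def by (auto intro!: code_eqI simp: vs)
lemma lin_snd_nil: "lin (cscale sc) (*) (\<lambda>z. snd z [])"
  unfolding lin_def by auto
lemma lin_J1: "vector_space sc \<Longrightarrow> lin (cscale sc) (cscale sc) (\<lambda>a. join a 0 0)"
  unfolding lin_def by (auto intro!: code_eqI simp: join_cscale cscale_zero join_add[symmetric])
lemma lin_J2: "vector_space sc \<Longrightarrow> lin (cscale sc) (cscale sc) (\<lambda>a. join 0 a 0)"
  unfolding lin_def by (auto simp: join_cscale cscale_zero join_add[symmetric])
lemma lin_J3: "vector_space sc \<Longrightarrow> lin (*) (cscale sc) (\<lambda>a. join 0 0 a)"
  unfolding lin_def by (auto simp: join_cscale cscale_zero join_add[symmetric])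



lemma cont_fstc: "continuous_on S Z \<Longrightarrow> continuous_on S (\<lambda>x. fst (Z x) p)"
  by (rule continuous_on_compose2[OF continuous_on_product_coordinates continuous_on_fst]) auto
lemma cont_sndc: "continuous_on S Z \<Longrightarrow> continuous_on S (\<lambda>x. snd (Z x) p)"
  by (rule continuous_on_compose2[OF continuous_on_product_coordinates continuous_on_snd]) auto

lemma cont_codeI:
  assumes "\<And>p. continuous_on S (\<lambda>x. fst (Z x) p)" "\<And>p. continuous_on S (\<lambda>x. snd (Z x) p)"
  shows "continuous_on S (Z :: _ \<Rightarrow> ('e::topological_space,'k::topological_space) code)"
proof -
  have "continuous_on S (\<lambda>x. (fst (Z x), snd (Z x)))"
    by (intro continuous_on_Pair continuous_on_coordinatewise_then_product assms)
  then show ?thesis by simp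
qed

lemma cont_join:
  assumes "continuous_on S a" "continuous_on S b" "continuous_on S c"
  shows "continuous_on S (\<lambda>x. join (a x) (b x) (c x) :: ('e::{zero,topological_space},'k::topological_space) code)"
proof (rule cont_codeI)
  fix p
  show "continuous_on S (\<lambda>x. fst (join (a x) (b x) (c x)) p)"
    by (rule code_list_cases[of "\<lambda>p. continuous_on S (\<lambda>x. fst (join (a x) (b x) (c x)) p)" p])
      (simp_all add: cont_fstc assms)
  show "continuous_on S (\<lambda>x. snd (join (a x) (b x) (c x)) p)"
    by (rule code_list_cases[of "\<lambda>p. continuous_on S (\<lambda>x. snd (join (a x) (b x) (c x)) p)" p])
      (simp_all add: cont_sndc assms)
qed

lemma cont_cleft: "continuous_on UNIV (cleft :: ('e::topological_space,'k::topological_space) code \<Rightarrow> _)"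
  by (rule cont_codeI) (simp_all add: cont_fstc cont_sndc continuous_on_id)
lemma cont_cright: "continuous_on UNIV (cright :: ('e::topological_space,'k::topological_space) code \<Rightarrow> _)"
  by (rule cont_codeI) (simp_all add: cont_fstc cont_sndc continuous_on_id)
lemma cont_proj: "continuous_on UNIV (proj j :: ('e::{zero,topological_space},'k::{zero,topological_space}) code \<Rightarrow> _)"
  apply (rule cont_codeI)
  subgoal for p by (cases "length p = j") (simp_all add: cont_fstc continuous_on_id)
  subgoal for p by (cases "length p < j") (simp_all add: cont_sndc continuous_on_id)
  done
lemma cont_lift0: "continuous_on UNIV (lift0 :: 'e::{zero,topological_space} \<Rightarrow> ('e,'k::{zero,topological_space}) code)"
  apply (rule cont_codeI)
  subgoal for p by (cases "p = []") (simp_all add: lift0_def continuous_on_id)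
  subgoal by (simp add: lift0_def)
  done
lemma cont_snd_nil: "continuous_on UNIV (\<lambda>z::('e::topological_space,'k::topological_space) code. snd z [])"
  by (simp add: cont_sndc continuous_on_id)

lemma code_add_cont:
  fixes abv :: "'k::{field,topological_space} \<Rightarrow> real" and sF :: "'k \<Rightarrow> 'f::{ab_group_add,t2_space} \<Rightarrow> 'f"
  assumes vf: "valued_field abv" and tF: "tvs sF"
  shows "continuous_on UNIV (\<lambda>z::('f,'k) code \<times> ('f,'k) code. fst z + snd z)"
proof (rule cont_codeI)
  fix p
  have c1: "continuous_on UNIV (\<lambda>z::('f,'k) code \<times> ('f,'k) code. (fst (fst z) p, fst (snd z) p))"
    by (intro continuous_on_Pair cont_fstc continuous_on_fst continuous_on_snd continuous_on_id)
  show "continuous_on UNIV (\<lambda>z::('f,'k) code \<times> ('f,'k) code. fst (fst z + snd z) p)"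
    using continuous_on_compose2[OF tvs_add[OF tF] c1] by simp
  have c2: "continuous_on UNIV (\<lambda>z::('f,'k) code \<times> ('f,'k) code. (snd (fst z) p, snd (snd z) p))"
    by (intro continuous_on_Pair cont_sndc continuous_on_fst continuous_on_snd continuous_on_id)
  have ka: "continuous_on UNIV (\<lambda>z::'k\<times>'k. fst z + snd z)" using vf_add_cont[OF vf] by (simp add: case_prod_unfold)
  show "continuous_on UNIV (\<lambda>z::('f,'k) code \<times> ('f,'k) code. snd (fst z + snd z) p)"
    using continuous_on_compose2[OF ka c2] by simp
qed

lemma code_scale_cont:
  fixes abv :: "'k::{field,topological_space} \<Rightarrow> real" and sF :: "'k \<Rightarrow> 'f::{ab_group_add,t2_space} \<Rightarrow> 'f"
  assumes vf: "valued_field abv" and tF: "tvs sF"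
  shows "continuous_on UNIV (\<lambda>z::'k \<times> ('f,'k) code. cscale sF (fst z) (snd z))"
proof (rule cont_codeI)
  fix p
  have c1: "continuous_on UNIV (\<lambda>z::'k \<times> ('f,'k) code. (fst z, fst (snd z) p))"
    by (intro continuous_on_Pair cont_fstc continuous_on_fst continuous_on_snd continuous_on_id)
  show "continuous_on UNIV (\<lambda>z::'k \<times> ('f,'k) code. fst (cscale sF (fst z) (snd z)) p)"
    using continuous_on_compose2[OF tvs_scale[OF tF] c1] by simp
  have c2: "continuous_on UNIV (\<lambda>z::'k \<times> ('f,'k) code. (fst z, snd (snd z) p))"
    by (intro continuous_on_Pair cont_sndc continuous_on_fst continuous_on_snd continuous_on_id)
  have ka: "continuous_on UNIV (\<lambda>z::'k\<times>'k. fst z * snd z)" using vf_mult_cont[OF vf] by (simp add: case_prod_unfold)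
  show "continuous_on UNIV (\<lambda>z::'k \<times> ('f,'k) code. snd (cscale sF (fst z) (snd z)) p)"
    using continuous_on_compose2[OF ka c2] by simp
qed



section \<open>Minkowski-type gauges\<close>

lemma add_half:
  fixes O0 :: "'x::{ab_group_add,topological_space} set"
  assumes add: "continuous_on UNIV (\<lambda>z::'x\<times>'x. fst z + snd z)" and "open O0" "0 \<in> O0"
  shows "\<exists>P. open P \<and> 0 \<in> P \<and> (\<forall>x\<in>P. \<forall>y\<in>P. x + y \<in> O0)"
proof -
  let ?S = "(\<lambda>z::'x\<times>'x. fst z + snd z) -` O0"
  have "open (?S \<inter> UNIV)" using add assms(2) continuous_on_open_vimage[OF open_UNIV] by blast
  then have "open ?S" by simp
  moreover have "(0,0) \<in> ?S" using assms(3) by simp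
  ultimately obtain A B where AB: "open A" "open B" "(0,0) \<in> A \<times> B" "A \<times> B \<subseteq> ?S"
    by (rule open_prod_elim)
  show ?thesis
  proof (intro exI[of _ "A \<inter> B"] conjI ballI)
    show "open (A \<inter> B)" using AB by auto
    show "0 \<in> A \<inter> B" using AB by auto
    fix x y assume "x \<in> A \<inter> B" "y \<in> A \<inter> B"
    then have "(x,y) \<in> ?S" using AB(4) by blast
    then show "x + y \<in> O0" by simp
  qed
qed

lemma cont_scale_fixed:
  assumes scl: "continuous_on UNIV (\<lambda>z::'k::topological_space \<times> 'x::topological_space. sc (fst z) (snd z))"
  shows "continuous_on UNIV (\<lambda>x. sc t x)"
  using continuous_on_compose2[OF scl continuous_on_Pair[OF continuous_on_const continuous_on_id, of UNIV t]]
  by simp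

lemma cont_scale_pt:
  assumes scl: "continuous_on UNIV (\<lambda>z::'k::topological_space \<times> 'x::topological_space. sc (fst z) (snd z))"
  shows "continuous_on UNIV (\<lambda>s. sc s x)"
  using continuous_on_compose2[OF scl continuous_on_Pair[OF continuous_on_id continuous_on_const, of UNIV x]]
  by simp

lemma open_vimage_UNIV: "continuous_on UNIV f \<Longrightarrow> open S \<Longrightarrow> open (f -` S)"
  using continuous_on_open_vimage[OF open_UNIV, of f] by auto

lemma minkowski:
  fixes abv :: "'k::{field,topological_space} \<Rightarrow> real" and sc :: "'k \<Rightarrow> 'x::{ab_group_add,topological_space} \<Rightarrow> 'x"
  assumes vf: "valued_field abv" and vsp: "vector_space sc"
    and add: "continuous_on UNIV (\<lambda>z::'x\<times>'x. fst z + snd z)"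
    and scl: "continuous_on UNIV (\<lambda>z::'k\<times>'x. sc (fst z) (snd z))"
    and g: "gauge abv sc q"
  shows "\<exists>q'. gauge abv sc q' \<and> (\<forall>u v w. q (u + v + w) \<le> max (q' u) (max (q' v) (q' w)))"
proof -
  note V = vs[OF vsp]
  note A = vf_props[OF vf]
  obtain O0 where O0: "open O0" "0 \<in> O0" "O0 \<subseteq> {x. q x < 1}"
    using g unfolding gauge_def by (meson zero_less_one)
  obtain P where P: "open P" "0 \<in> P" "\<forall>x\<in>P. \<forall>y\<in>P. x + y \<in> O0" using add_half[OF add O0(1,2)] by blast
  obtain Q where Q: "open Q" "0 \<in> Q" "\<forall>x\<in>Q. \<forall>y\<in>Q. x + y \<in> P" using add_half[OF add P(1,2)] by blast
  have Q3: "x + y + z \<in> O0" if "x \<in> Q" "y \<in> Q" "z \<in> Q" for x y z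
  proof -
    have "x + y \<in> P" using Q that by blast
    moreover have "z \<in> P" using Q(3) that(3) Q(2) by (metis add.right_neutral)
    ultimately show ?thesis using P(3) by blast
  qed
  let ?S = "(\<lambda>z::'k\<times>'x. sc (fst z) (snd z)) -` Q"
  have "open ?S" using open_vimage_UNIV[OF scl Q(1)] .
  moreover have "(0,0) \<in> ?S" using Q(2) V by simp
  ultimately obtain A' B' where AB: "open A'" "open B'" "(0,0) \<in> A' \<times> B'" "A' \<times> B' \<subseteq> ?S"
    by (rule open_prod_elim)
  obtain \<delta> where \<delta>: "\<delta> > 0" "\<forall>y. abv (y - 0) < \<delta> \<longrightarrow> y \<in> A'"
    using AB(1,3) A(5) by blast
  have hsc: "sc l r \<in> Q" if "abv l < \<delta>" "r \<in> B'" for l r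
    using \<delta> that AB(4) by force
  define B where "B = {sc l r | l r. l \<noteq> 0 \<and> abv l < \<delta> \<and> r \<in> B'}"
  have B_eq: "B = (\<Union>l\<in>{l. l \<noteq> 0 \<and> abv l < \<delta>}. (\<lambda>x. sc (inverse l) x) -` B')"
  proof (intro set_eqI iffI)
    fix x assume "x \<in> B"
    then obtain l r where "x = sc l r" "l \<noteq> 0" "abv l < \<delta>" "r \<in> B'" unfolding B_def by blast
    then show "x \<in> (\<Union>l\<in>{l. l \<noteq> 0 \<and> abv l < \<delta>}. (\<lambda>x. sc (inverse l) x) -` B')"
      using V by auto
  next
    fix x assume "x \<in> (\<Union>l\<in>{l. l \<noteq> 0 \<and> abv l < \<delta>}. (\<lambda>x. sc (inverse l) x) -` B')"
    then obtain l where l: "l \<noteq> 0" "abv l < \<delta>" "sc (inverse l) x \<in> B'" by auto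
    have "x = sc l (sc (inverse l) x)" using V l by simp
    then show "x \<in> B" unfolding B_def using l by blast
  qed
  have B_open: "open B" unfolding B_eq
    by (intro open_UN ballI open_vimage_UNIV[OF cont_scale_fixed[OF scl]] AB(2))
  obtain l0 where l0: "l0 \<noteq> 0" "abv l0 < \<delta>" using vf_small[OF vf \<delta>(1)] by blast
  have B0: "0 \<in> B"
  proof -
    have "0 = sc l0 0" using V by simp
    moreover have "(0::'x) \<in> B'" using AB(3) by simp
    ultimately show ?thesis unfolding B_def using l0 by blast
  qed
  have BQ: "B \<subseteq> Q" unfolding B_def using hsc by blast
  have B_bal: "sc \<mu> x \<in> B" if "abv \<mu> \<le> 1" "x \<in> B" for \<mu> x
  proof (cases "\<mu> = 0")
    case True then show ?thesis using B0 V by simp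
  next
    case False
    from that obtain l r where lr: "x = sc l r" "l \<noteq> 0" "abv l < \<delta>" "r \<in> B'" unfolding B_def by blast
    have "abv \<mu> * abv l \<le> abv l" using that(1) A(1)[of l] A(1)[of \<mu>] by (simp add: mult_left_le_one_le)
    then have "abv (\<mu> * l) < \<delta>" using A(3) lr(3) by simp
    moreover have "sc \<mu> x = sc (\<mu> * l) r" using lr V by simp
    moreover have "\<mu> * l \<noteq> 0" using lr False by simp
    ultimately show ?thesis unfolding B_def using lr by blast
  qed
  define M where "M x = {abv t | t. t \<noteq> 0 \<and> sc (inverse t) x \<in> B}" for x
  define q' where "q' x = Inf (M x)" for x
  have M_ne: "M x \<noteq> {}" for x
  proof -
    have "open ((\<lambda>s. sc s x) -` B)" by (rule open_vimage_UNIV[OF cont_scale_pt[OF scl] B_open])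
    moreover have "0 \<in> (\<lambda>s. sc s x) -` B" using B0 V by simp
    ultimately obtain \<epsilon> where \<epsilon>: "\<epsilon> > 0" "\<forall>y. abv (y - 0) < \<epsilon> \<longrightarrow> y \<in> (\<lambda>s. sc s x) -` B"
      using A(5) by blast
    obtain s where s: "s \<noteq> 0" "abv s < \<epsilon>" using vf_small[OF vf \<epsilon>(1)] by blast
    have "abv (inverse s) \<in> M x" unfolding M_def using s \<epsilon> by auto
    then show ?thesis by blast
  qed
  have M_bdd: "bdd_below (M x)" for x unfolding M_def bdd_below_def using A(1) by blast
  have q'_nn: "0 \<le> q' x" for x unfolding q'_def
    by (rule cInf_greatest[OF M_ne]) (auto simp: M_def A(1))
  have q'_le: "q' x \<le> abv t" if "t \<noteq> 0" "sc (inverse t) x \<in> B" for x t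
    unfolding q'_def by (rule cInf_lower[OF _ M_bdd]) (use that in \<open>auto simp: M_def\<close>)
  have q'_lt: "\<exists>t. t \<noteq> 0 \<and> sc (inverse t) x \<in> B \<and> abv t < r" if "q' x < r" for x r
    using cInf_lessD[OF M_ne that[unfolded q'_def]] unfolding M_def by blast
  have hom_le: "q' (sc s x) \<le> abv s * q' x" if "s \<noteq> 0" for s x
  proof -
    have sp: "abv s > 0" using A(1,2) that by (metis less_eq_real_def)
    have "q' (sc s x) / abv s \<le> q' x" unfolding q'_def[of x]
    proof (rule cInf_greatest[OF M_ne])
      fix a assume "a \<in> M x"
      then obtain t where t: "a = abv t" "t \<noteq> 0" "sc (inverse t) x \<in> B" unfolding M_def by blast
      have e1: "inverse (s * t) * s = inverse t" using that t(2) by (simp add: inverse_mult_distrib)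
      have "sc (inverse (s * t)) (sc s x) = sc (inverse t) x" by (simp only: V(5) e1)
      then have "q' (sc s x) \<le> abv (s * t)" using q'_le[of "s * t"] t that by simp
      then have "q' (sc s x) \<le> abv s * a" using A(3) t(1) by simp
      then show "q' (sc s x) / abv s \<le> a" by (simp add: pos_divide_le_eq[OF sp] mult.commute)
    qed
    then show ?thesis by (simp add: pos_divide_le_eq[OF sp] mult.commute)
  qed
  have hom: "q' (sc s x) = abv s * q' x" for s x
  proof (cases "s = 0")
    case True
    have "q' 0 \<le> 0"
    proof (rule ccontr)
      assume "\<not> q' 0 \<le> 0"
      then obtain t where "t \<noteq> 0" "abv t < q' 0" using vf_small[OF vf, of "q' 0"] by auto
      moreover have "q' 0 \<le> abv t" using q'_le[of t 0] B0 V \<open>t \<noteq> 0\<close> by simp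
      ultimately show False by simp
    qed
    then show ?thesis using True V q'_nn[of 0] vf_zero[OF vf] by simp
  next
    case False
    have sp: "abv s > 0" using A(1,2) False by (metis less_eq_real_def)
    have "q' x = q' (sc (inverse s) (sc s x))" using V False by simp
    also have "\<dots> \<le> abv (inverse s) * q' (sc s x)" using hom_le False by simp
    finally have h: "q' x \<le> inverse (abv s) * q' (sc s x)" using vf_inverse[OF vf False] by simp
    have h2: "abv s * q' x \<le> abv s * (inverse (abv s) * q' (sc s x))" using sp h by (intro mult_left_mono) auto
    have eq: "abv s * (inverse (abv s) * q' (sc s x)) = q' (sc s x)" using sp by (simp add: mult.assoc[symmetric])
    have "abv s * q' x \<le> q' (sc s x)" using h2 eq by linarith
    then show ?thesis using hom_le[OF False, of x] by linarith
  qed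
  have gq': "gauge abv sc q'"
    unfolding gauge_def
  proof (intro conjI allI impI)
    fix x show "0 \<le> q' x" by (rule q'_nn)
  next
    fix t x show "q' (sc t x) = abv t * q' x" by (rule hom)
  next
    fix r :: real assume "r > 0"
    obtain t where t: "t \<noteq> 0" "abv t < r" using vf_small[OF vf \<open>r > 0\<close>] by blast
    show "\<exists>N. open N \<and> 0 \<in> N \<and> N \<subseteq> {x. q' x < r}"
    proof (intro exI[of _ "(\<lambda>x. sc (inverse t) x) -` B"] conjI)
      show "open ((\<lambda>x. sc (inverse t) x) -` B)" by (rule open_vimage_UNIV[OF cont_scale_fixed[OF scl] B_open])
      show "0 \<in> (\<lambda>x. sc (inverse t) x) -` B" using B0 V by simp
      show "(\<lambda>x. sc (inverse t) x) -` B \<subseteq> {x. q' x < r}" using q'_le t by fastforce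
    qed
  qed
  have enlarge: "sc (inverse s) x \<in> B" if "t \<noteq> 0" "s \<noteq> 0" "abv t \<le> abv s" "sc (inverse t) x \<in> B" for s t x
  proof -
    have sp: "abv s > 0" using A(1)[of s] A(2)[of s] that(2) by (simp add: less_le)
    have "abv (inverse s * t) = abv t / abv s" using A(3) vf_inverse[OF vf that(2)] by (simp add: divide_inverse mult.commute)
    then have "abv (inverse s * t) \<le> 1" using sp that(3) by (simp add: pos_divide_le_eq[OF sp])
    then have "sc (inverse s * t) (sc (inverse t) x) \<in> B" using B_bal that(4) by blast
    moreover have "inverse s * t * inverse t = inverse s" using that(1) by simp
    ultimately show ?thesis by (simp only: V(5))
  qed
  have key: "q (u + v + w) \<le> max (q' u) (max (q' v) (q' w))" for u v w
  proof (rule field_le_epsilon)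
    fix e :: real assume "e > 0"
    let ?m = "max (q' u) (max (q' v) (q' w))"
    obtain tu where tu: "tu \<noteq> 0" "sc (inverse tu) u \<in> B" "abv tu < ?m + e" using q'_lt[of u "?m + e"] \<open>e>0\<close> by force
    obtain tv where tv: "tv \<noteq> 0" "sc (inverse tv) v \<in> B" "abv tv < ?m + e" using q'_lt[of v "?m + e"] \<open>e>0\<close> by force
    obtain tw where tw: "tw \<noteq> 0" "sc (inverse tw) w \<in> B" "abv tw < ?m + e" using q'_lt[of w "?m + e"] \<open>e>0\<close> by force
    obtain s where s: "s \<noteq> 0" "abv tu \<le> abv s" "abv tv \<le> abv s" "abv tw \<le> abv s" "abv s < ?m + e"
    proof -
      consider "abv tv \<le> abv tu \<and> abv tw \<le> abv tu" | "abv tu \<le> abv tv \<and> abv tw \<le> abv tv" | "abv tu \<le> abv tw \<and> abv tv \<le> abv tw"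
        by linarith
      then show ?thesis using that tu tv tw by cases auto
    qed
    have a: "sc (inverse s) u \<in> Q" "sc (inverse s) v \<in> Q" "sc (inverse s) w \<in> Q"
      using enlarge[OF tu(1) s(1) s(2) tu(2)] enlarge[OF tv(1) s(1) s(3) tv(2)]
        enlarge[OF tw(1) s(1) s(4) tw(2)] BQ by auto
    have "sc (inverse s) u + sc (inverse s) v + sc (inverse s) w \<in> O0" using Q3 a by blast
    then have lt1: "q (sc (inverse s) (u + v + w)) < 1" using O0(3) V by auto
    have "u + v + w = sc s (sc (inverse s) (u + v + w))" using V s(1) by simp
    then have "q (u + v + w) = abv s * q (sc (inverse s) (u + v + w))"
      using g unfolding gauge_def by metis
    also have "\<dots> \<le> abv s" using lt1 A(1)[of s] by (simp add: mult_left_le)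
    finally show "q (u + v + w) \<le> ?m + e" using s(5) by simp
  qed
  show ?thesis using gq' key by blast
qed



lemma code_zero_eq: "((\<lambda>_. 0, \<lambda>_. 0) :: ('e::zero,'k::zero) code) = 0"
  by (rule code_eqI) auto

lemma lin_comp: "lin A B L1 \<Longrightarrow> lin B C L2 \<Longrightarrow> lin A C (\<lambda>x. L2 (L1 x))"
  unfolding lin_def by simp

lemma BGN_SucE:
  assumes "BGN abv sE sF \<sigma> (Suc k) j W G"
  obtains G1 where "continuous_on W G" "holder_code abv sE sF \<sigma> j W G"
    "continuous_on (W1 sE j W) G1"
    "\<forall>x y t. x \<in> W \<longrightarrow> y \<in> shape j \<longrightarrow> t \<noteq> 0 \<longrightarrow> cadd x (cscale sE t y) \<in> W \<longrightarrow>
           G1 (join x y t) = sF (inverse t) (G (cadd x (cscale sE t y)) - G x)"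
    "BGN abv sE sF \<sigma> k (Suc j) (W1 sE j W) G1"
proof -
  have h: "continuous_on W G \<and> holder_code abv sE sF \<sigma> j W G \<and>
     (\<exists>G1. continuous_on (W1 sE j W) G1 \<and>
        (\<forall>x y t. x \<in> W \<longrightarrow> y \<in> shape j \<longrightarrow> t \<noteq> 0 \<longrightarrow> cadd x (cscale sE t y) \<in> W \<longrightarrow>
           G1 (join x y t) = sF (inverse t) (G (cadd x (cscale sE t y)) - G x)) \<and>
        BGN abv sE sF \<sigma> k (Suc j) (W1 sE j W) G1)"
    using assms by (simp only: BGN.simps)
  then obtain G1 where g: "continuous_on (W1 sE j W) G1"
        "\<forall>x y t. x \<in> W \<longrightarrow> y \<in> shape j \<longrightarrow> t \<noteq> 0 \<longrightarrow> cadd x (cscale sE t y) \<in> W \<longrightarrow>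
           G1 (join x y t) = sF (inverse t) (G (cadd x (cscale sE t y)) - G x)"
        "BGN abv sE sF \<sigma> k (Suc j) (W1 sE j W) G1"
    by (elim conjE exE)
  show ?thesis
  proof (rule that[of G1])
    show "continuous_on W G" using h by (elim conjE)
    show "holder_code abv sE sF \<sigma> j W G" using h by (elim conjE)
    show "continuous_on (W1 sE j W) G1" by (rule g(1))
    show "BGN abv sE sF \<sigma> k (Suc j) (W1 sE j W) G1" by (rule g(3))
    show "\<forall>x y t. x \<in> W \<longrightarrow> y \<in> shape j \<longrightarrow> t \<noteq> 0 \<longrightarrow> cadd x (cscale sE t y) \<in> W \<longrightarrow>
           G1 (join x y t) = sF (inverse t) (G (cadd x (cscale sE t y)) - G x)" by (rule g(2))
  qed
qed

lemma BGN_SucI: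
  assumes "continuous_on W G" "holder_code abv sE sF \<sigma> j W G"
    "continuous_on (W1 sE j W) G1"
    "\<forall>x y t. x \<in> W \<longrightarrow> y \<in> shape j \<longrightarrow> t \<noteq> 0 \<longrightarrow> cadd x (cscale sE t y) \<in> W \<longrightarrow>
           G1 (join x y t) = sF (inverse t) (G (cadd x (cscale sE t y)) - G x)"
    "BGN abv sE sF \<sigma> k (Suc j) (W1 sE j W) G1"
  shows "BGN abv sE sF \<sigma> (Suc k) j W G"
  unfolding BGN.simps using assms by (intro conjI exI[of _ G1])

lemma BGN_mono: "BGN abv sE sF \<sigma> (Suc k) j W G \<Longrightarrow> BGN abv sE sF \<sigma> k j W G"
proof (induction k arbitrary: j W G)
  case 0 then show ?case by simp
next
  case (Suc k)
  from Suc.prems obtain G1 where G: "continuous_on W G" "holder_code abv sE sF \<sigma> j W G"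
    "continuous_on (W1 sE j W) G1"
    "\<forall>x y t. x \<in> W \<longrightarrow> y \<in> shape j \<longrightarrow> t \<noteq> 0 \<longrightarrow> cadd x (cscale sE t y) \<in> W \<longrightarrow>
           G1 (join x y t) = sF (inverse t) (G (cadd x (cscale sE t y)) - G x)"
    "BGN abv sE sF \<sigma> (Suc k) (Suc j) (W1 sE j W) G1"
    by (erule BGN_SucE)
  show ?case by (rule BGN_SucI[OF G(1) G(2) G(3) G(4) Suc.IH[OF G(5)]])
qed

lemma gauge_comp:
  fixes L :: "'a::{ab_group_add,topological_space} \<Rightarrow> 'b::{ab_group_add,topological_space}"
  assumes "gauge abv scB q" "lin scA scB L" "continuous_on UNIV L"
  shows "gauge abv scA (\<lambda>x. q (L x))"
  unfolding gauge_def
proof (intro conjI allI impI)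
  fix x show "0 \<le> q (L x)" using assms(1) unfolding gauge_def by simp
next
  fix t x show "q (L (scA t x)) = abv t * q (L x)" using assms(1,2) unfolding gauge_def by (simp add: lin_scale)
next
  fix r :: real assume "r > 0"
  then obtain N where N: "open N" "0 \<in> N" "N \<subseteq> {x. q x < r}" using assms(1) unfolding gauge_def by blast
  show "\<exists>N. open N \<and> 0 \<in> N \<and> N \<subseteq> {x. q (L x) < r}"
    using N open_vimage_UNIV[OF assms(3) N(1)] lin_zero[OF assms(2)] by (intro exI[of _ "L -` N"]) auto
qed

lemma holder_post:
  fixes L :: "'f::{ab_group_add,topological_space} \<Rightarrow> 'g::{ab_group_add,topological_space}"
  assumes "holder_code abv sE scF \<sigma> j W G" "lin scF scG L" "continuous_on UNIV L"
  shows "holder_code abv sE scG \<sigma> j W (\<lambda>x. L (G x))"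
  unfolding holder_code_def
proof (intro ballI allI impI)
  fix x0 q assume x0: "x0 \<in> W" and q: "gauge abv scG q"
  have "gauge abv scF (\<lambda>x. q (L x))" by (rule gauge_comp[OF q assms(2,3)])
  then obtain p N where h: "code_gauge abv sE j p" "open N" "x0 \<in> N"
    "\<forall>x\<in>W \<inter> N. \<forall>y\<in>W \<inter> N. q (L (G y - G x)) \<le> p (cdiff y x) powr \<sigma>"
    using assms(1) x0 unfolding holder_code_def by blast
  have "\<forall>x\<in>W \<inter> N. \<forall>y\<in>W \<inter> N. q (L (G y) - L (G x)) \<le> p (cdiff y x) powr \<sigma>"
    using h(4) by (simp add: lin_diff[OF assms(2)])
  then show "\<exists>p. code_gauge abv sE j p \<and> (\<exists>N. open N \<and> x0 \<in> N \<and>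
      (\<forall>x\<in>W \<inter> N. \<forall>y\<in>W \<inter> N. q (L (G y) - L (G x)) \<le> p (cdiff y x) powr \<sigma>))"
    using h(1-3) by blast
qed

lemma BGN_post:
  fixes L :: "'f::{ab_group_add,topological_space} \<Rightarrow> 'g::{ab_group_add,topological_space}"
  assumes "lin scF scG L" "continuous_on UNIV L"
  shows "BGN abv sE scF \<sigma> k j W G \<Longrightarrow> BGN abv sE scG \<sigma> k j W (\<lambda>x. L (G x))"
proof (induction k arbitrary: j W G)
  case 0
  then show ?case using holder_post[OF _ assms] continuous_on_compose2[OF assms(2)] by auto
next
  case (Suc k)
  from Suc.prems obtain G1 where G: "continuous_on W G" "holder_code abv sE scF \<sigma> j W G"
    "continuous_on (W1 sE j W) G1"
    "\<forall>x y t. x \<in> W \<longrightarrow> y \<in> shape j \<longrightarrow> t \<noteq> 0 \<longrightarrow> cadd x (cscale sE t y) \<in> W \<longrightarrow>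
           G1 (join x y t) = scF (inverse t) (G (cadd x (cscale sE t y)) - G x)"
    "BGN abv sE scF \<sigma> k (Suc j) (W1 sE j W) G1"
    by (erule BGN_SucE)
  have "continuous_on W (\<lambda>x. L (G x))" using continuous_on_compose2[OF assms(2) G(1)] by simp
  moreover have "holder_code abv sE scG \<sigma> j W (\<lambda>x. L (G x))" by (rule holder_post[OF G(2) assms])
  moreover have "continuous_on (W1 sE j W) (\<lambda>x. L (G1 x))" using continuous_on_compose2[OF assms(2) G(3)] by simp
  moreover have "\<forall>x y t. x \<in> W \<longrightarrow> y \<in> shape j \<longrightarrow> t \<noteq> 0 \<longrightarrow> cadd x (cscale sE t y) \<in> W \<longrightarrow>
           L (G1 (join x y t)) = scG (inverse t) (L (G (cadd x (cscale sE t y))) - L (G x))"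
  proof (intro allI impI)
    fix x y t assume "x \<in> W" "y \<in> shape j" "t \<noteq> 0" "cadd x (cscale sE t y) \<in> W"
    then have "G1 (join x y t) = scF (inverse t) (G (cadd x (cscale sE t y)) - G x)" using G(4) by blast
    then show "L (G1 (join x y t)) = scG (inverse t) (L (G (cadd x (cscale sE t y))) - L (G x))"
      by (simp add: lin_scale[OF assms(1)] lin_diff[OF assms(1)])
  qed
  moreover have "BGN abv sE scG \<sigma> k (Suc j) (W1 sE j W) (\<lambda>x. L (G1 x))" by (rule Suc.IH[OF G(5)])
  ultimately show ?case by (rule BGN_SucI)
qed

lemma code_gauge_comp:
  fixes L :: "('e::{ab_group_add,topological_space},'k::{field,topological_space}) code \<Rightarrow> ('e,'k) code"
  assumes "code_gauge abv sE j p" "lin (cscale sE) (cscale sE) L" "continuous_on UNIV L" "L ` shape j' \<subseteq> shape j"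
  shows "code_gauge abv sE j' (\<lambda>x. p (L x))"
  unfolding code_gauge_def
proof (intro conjI allI impI ballI)
  fix x :: "('e,'k) code" assume "x \<in> shape j'"
  then have "L x \<in> shape j" using assms(4) by blast
  then show "0 \<le> p (L x)" using assms(1) unfolding code_gauge_def by blast
next
  fix t and x :: "('e,'k) code" assume "x \<in> shape j'"
  then have "L x \<in> shape j" using assms(4) by blast
  moreover have "\<forall>t. \<forall>x\<in>shape j. p (cscale sE t x) = abv t * p x" using assms(1) unfolding code_gauge_def by blast
  ultimately show "p (L (cscale sE t x)) = abv t * p (L x)" by (simp add: lin_scale[OF assms(2)])
next
  fix r :: real assume "r > 0"
  then obtain N where N: "open N" "0 \<in> N" "shape j \<inter> N \<subseteq> {x. p x < r}"
    using assms(1) unfolding code_gauge_def code_zero_eq by blast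
  show "\<exists>N. open N \<and> (\<lambda>_. 0, \<lambda>_. 0) \<in> N \<and> shape j' \<inter> N \<subseteq> {x. p (L x) < r}"
    unfolding code_zero_eq
  proof (intro exI[of _ "L -` N"] conjI)
    show "open (L -` N)" by (rule open_vimage_UNIV[OF assms(3) N(1)])
    show "0 \<in> L -` N" using N(2) lin_zero[OF assms(2)] by simp
    show "shape j' \<inter> L -` N \<subseteq> {x. p (L x) < r}"
    proof
      fix x assume "x \<in> shape j' \<inter> L -` N"
      then have "L x \<in> shape j \<inter> N" using assms(4) by blast
      then show "x \<in> {x. p (L x) < r}" using N(3) by blast
    qed
  qed
qed

lemma holder_pre:
  fixes L :: "('e::{ab_group_add,topological_space},'k::{field,topological_space}) code \<Rightarrow> ('e,'k) code"
  assumes "holder_code abv sE scF \<sigma> j W G" "lin (cscale sE) (cscale sE) L" "continuous_on UNIV L"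
    "L ` shape j' \<subseteq> shape j" "L ` W' \<subseteq> W"
  shows "holder_code abv sE scF \<sigma> j' W' (\<lambda>x. G (L x))"
  unfolding holder_code_def
proof (intro ballI allI impI)
  fix x0 q assume x0: "x0 \<in> W'" and q: "gauge abv scF q"
  then have "L x0 \<in> W" using assms(5) by blast
  then obtain p N where pN: "code_gauge abv sE j p" "open N" "L x0 \<in> N"
    "\<forall>x\<in>W \<inter> N. \<forall>y\<in>W \<inter> N. q (G y - G x) \<le> p (cdiff y x) powr \<sigma>"
    using assms(1) q unfolding holder_code_def by blast
  show "\<exists>p. code_gauge abv sE j' p \<and> (\<exists>N. open N \<and> x0 \<in> N \<and>
      (\<forall>x\<in>W' \<inter> N. \<forall>y\<in>W' \<inter> N. q (G (L y) - G (L x)) \<le> p (cdiff y x) powr \<sigma>))"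
  proof (intro exI conjI)
    show "code_gauge abv sE j' (\<lambda>x. p (L x))" by (rule code_gauge_comp[OF pN(1) assms(2-4)])
    show "open (L -` N)" by (rule open_vimage_UNIV[OF assms(3) pN(2)])
    show "x0 \<in> L -` N" using pN(3) by simp
    show "\<forall>x\<in>W' \<inter> L -` N. \<forall>y\<in>W' \<inter> L -` N. q (G (L y) - G (L x)) \<le> p (L (cdiff y x)) powr \<sigma>"
    proof (intro ballI)
      fix x y assume x: "x \<in> W' \<inter> L -` N" and y: "y \<in> W' \<inter> L -` N"
      then have "L x \<in> W \<inter> N" "L y \<in> W \<inter> N" using assms(5) by auto
      then have "q (G (L y) - G (L x)) \<le> p (cdiff (L y) (L x)) powr \<sigma>" using pN(4) by blast
      moreover have "cdiff (L y) (L x) = L (cdiff y x)" by (simp add: cdiff_eq lin_diff[OF assms(2)])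
      ultimately show "q (G (L y) - G (L x)) \<le> p (L (cdiff y x)) powr \<sigma>" by simp
    qed
  qed
qed

definition lift1 :: "(('e,'k) code \<Rightarrow> ('e,'k) code) \<Rightarrow> ('e::zero,'k) code \<Rightarrow> ('e,'k) code" where
  "lift1 L z = join (L (cleft z)) (L (cright z)) (snd z [])"

lemma lift1_join [simp]: "lift1 L (join x y t) = join (L x) (L y) t"
  unfolding lift1_def by simp

lemma lin_lift1:
  assumes "vector_space sE" "lin (cscale sE) (cscale sE) (L :: ('e::ab_group_add,'k::field) code \<Rightarrow> _)"
  shows "lin (cscale sE) (cscale sE) (lift1 L)"
  unfolding lin_def lift1_def
proof (intro conjI allI)
  fix x y :: "('e,'k) code"
  have "cleft (x + y) = cleft x + cleft y" "cright (x + y) = cright x + cright y"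
    by (auto intro!: code_eqI)
  then show "join (L (cleft (x + y))) (L (cright (x + y))) (snd (x + y) []) =
    join (L (cleft x)) (L (cright x)) (snd x []) + join (L (cleft y)) (L (cright y)) (snd y [])"
    using lin_add[OF assms(2)] by (simp add: join_add[symmetric])
next
  fix t and x :: "('e,'k) code"
  have "cleft (cscale sE t x) = cscale sE t (cleft x)" "cright (cscale sE t x) = cscale sE t (cright x)"
    by (auto intro!: code_eqI)
  then show "join (L (cleft (cscale sE t x))) (L (cright (cscale sE t x))) (snd (cscale sE t x) []) =
    cscale sE t (join (L (cleft x)) (L (cright x)) (snd x []))"
    using lin_scale[OF assms(2)] join_cscale[OF assms(1)] by simp
qed

lemma cont_lift1:
  assumes "continuous_on UNIV (L :: ('e::{zero,topological_space},'k::topological_space) code \<Rightarrow> _)"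
  shows "continuous_on UNIV (lift1 L)"
  unfolding lift1_def
  by (intro cont_join continuous_on_compose2[OF assms cont_cleft] continuous_on_compose2[OF assms cont_cright]
      cont_snd_nil) auto

lemma shape_lift1:
  assumes "L ` shape j' \<subseteq> shape j"
  shows "lift1 L ` shape (Suc j') \<subseteq> shape (Suc j)"
  unfolding lift1_def using assms shape_cleft shape_cright by (blast intro: shape_join)

lemma W1_lift1:
  assumes "vector_space sE" "lin (cscale sE) (cscale sE) (L :: ('e::ab_group_add,'k::field) code \<Rightarrow> _)"
    "L ` shape j' \<subseteq> shape j" "L ` W' \<subseteq> W"
  shows "lift1 L ` W1 sE j' W' \<subseteq> W1 sE j W"
proof
  fix z assume "z \<in> lift1 L ` W1 sE j' W'"
  then obtain x y t where z: "z = join (L x) (L y) t" "x \<in> W'" "y \<in> shape j'" "x + cscale sE t y \<in> W'"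
    using W1_mem by fastforce
  have "L x + cscale sE t (L y) = L (x + cscale sE t y)" using lin_add[OF assms(2)] lin_scale[OF assms(2)] by simp
  then show "z \<in> W1 sE j W" using z assms(3,4) by (auto intro!: W1_memI)
qed

lemma BGN_pre:
  fixes L :: "('e::{ab_group_add,topological_space},'k::{field,topological_space}) code \<Rightarrow> ('e,'k) code"
  assumes "vector_space sE"
  shows "lin (cscale sE) (cscale sE) L \<Longrightarrow> continuous_on UNIV L \<Longrightarrow> L ` shape j' \<subseteq> shape j \<Longrightarrow> L ` W' \<subseteq> W
    \<Longrightarrow> BGN abv sE scF \<sigma> k j W G \<Longrightarrow> BGN abv sE scF \<sigma> k j' W' (\<lambda>x. G (L x))"
proof (induction k arbitrary: j j' W W' L G)
  case 0
  have c: "continuous_on W' (\<lambda>x. G (L x))"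
    by (rule continuous_on_compose2[of W G W' L]) (use 0 continuous_on_subset[of UNIV L W'] in auto)
  have "holder_code abv sE scF \<sigma> j' W' (\<lambda>x. G (L x))"
    by (rule holder_pre[of abv sE scF \<sigma> j W G L j' W']) (use 0 in auto)
  then show ?case using c by simp
next
  case (Suc k)
  from Suc.prems(5) obtain G1 where G: "continuous_on W G" "holder_code abv sE scF \<sigma> j W G"
    "continuous_on (W1 sE j W) G1"
    "\<forall>x y t. x \<in> W \<longrightarrow> y \<in> shape j \<longrightarrow> t \<noteq> 0 \<longrightarrow> cadd x (cscale sE t y) \<in> W \<longrightarrow>
           G1 (join x y t) = scF (inverse t) (G (cadd x (cscale sE t y)) - G x)"
    "BGN abv sE scF \<sigma> k (Suc j) (W1 sE j W) G1"
    by (erule BGN_SucE)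
  have l1: "lin (cscale sE) (cscale sE) (lift1 L)" by (rule lin_lift1[OF assms Suc.prems(1)])
  have c1: "continuous_on UNIV (lift1 L)" by (rule cont_lift1[OF Suc.prems(2)])
  have s1: "lift1 L ` shape (Suc j') \<subseteq> shape (Suc j)" by (rule shape_lift1[OF Suc.prems(3)])
  have w1: "lift1 L ` W1 sE j' W' \<subseteq> W1 sE j W" by (rule W1_lift1[OF assms Suc.prems(1,3,4)])
  have IH: "BGN abv sE scF \<sigma> k (Suc j') (W1 sE j' W') (\<lambda>x. G1 (lift1 L x))"
    by (rule Suc.IH[OF l1 c1 s1 w1 G(5)])
  have "continuous_on W' (\<lambda>x. G (L x))"
    using continuous_on_compose2[OF G(1) continuous_on_subset[OF Suc.prems(2)] Suc.prems(4)] by simp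
  moreover have "holder_code abv sE scF \<sigma> j' W' (\<lambda>x. G (L x))" by (rule holder_pre[OF G(2) Suc.prems(1-4)])
  moreover have "continuous_on (W1 sE j' W') (\<lambda>x. G1 (lift1 L x))"
    using continuous_on_compose2[OF G(3) continuous_on_subset[OF c1] w1] by simp
  moreover have "\<forall>x y t. x \<in> W' \<longrightarrow> y \<in> shape j' \<longrightarrow> t \<noteq> 0 \<longrightarrow> cadd x (cscale sE t y) \<in> W' \<longrightarrow>
           G1 (lift1 L (join x y t)) = scF (inverse t) (G (L (cadd x (cscale sE t y))) - G (L x))"
  proof (intro allI impI)
    fix x y t assume h: "x \<in> W'" "y \<in> shape j'" "t \<noteq> 0" "cadd x (cscale sE t y) \<in> W'"
    have e: "L (cadd x (cscale sE t y)) = cadd (L x) (cscale sE t (L y))"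
      using lin_add[OF Suc.prems(1)] lin_scale[OF Suc.prems(1)] by (simp add: cadd_eq)
    have hh: "L x \<in> W" "L y \<in> shape j" "cadd (L x) (cscale sE t (L y)) \<in> W"
      using h Suc.prems(3,4) e by (auto simp del: cadd_eq simp: e[symmetric])
    have "G1 (join (L x) (L y) t) = scF (inverse t) (G (cadd (L x) (cscale sE t (L y))) - G (L x))"
      by (rule G(4)[rule_format]) (use hh h(3) in auto)
    then show "G1 (lift1 L (join x y t)) = scF (inverse t) (G (L (cadd x (cscale sE t y))) - G (L x))"
      using e by simp
  qed
  ultimately show ?case using IH by (rule BGN_SucI)
qed



lemma holder_lfun:
  fixes abv :: "'k::{field,topological_space} \<Rightarrow> real" and sE :: "'k \<Rightarrow> 'e::{ab_group_add,topological_space} \<Rightarrow> 'e"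
    and l :: "('e,'k) code \<Rightarrow> 'k"
  assumes vf: "valued_field abv" and ll: "lin (cscale sE) (*) l" and cl: "continuous_on UNIV l"
    and s0: "0 < \<sigma>" and s1: "\<sigma> \<le> 1"
  shows "holder_code abv sE (*) \<sigma> j W l"
  unfolding holder_code_def
proof (intro ballI allI impI)
  note A = vf_props[OF vf]
  fix x0 q assume x0: "x0 \<in> W" and q: "gauge abv (*) q"
  define c where "c = q 1"
  have hq: "q s = abv s * c" for s using q unfolding gauge_def c_def by (metis mult.right_neutral)
  have c0: "c \<ge> 0" using q unfolding gauge_def c_def by simp
  define m where "m = (c + 1) powr (1 / \<sigma>)"
  have m0: "m > 0" unfolding m_def using c0 by simp
  have mp: "m powr \<sigma> = c + 1" unfolding m_def using c0 s0 by (simp add: powr_powr)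
  define p where "p z = m * abv (l z)" for z
  have cg: "code_gauge abv sE j p"
    unfolding code_gauge_def
  proof (intro conjI allI impI ballI)
    fix x :: "('e,'k) code" show "0 \<le> p x" unfolding p_def using m0 A(1) by simp
  next
    fix t and x :: "('e,'k) code" show "p (cscale sE t x) = abv t * p x"
      unfolding p_def using lin_scale[OF ll] A(3) by simp
  next
    fix r :: real assume "r > 0"
    show "\<exists>N. open N \<and> (\<lambda>_. 0, \<lambda>_. 0) \<in> N \<and> shape j \<inter> N \<subseteq> {x. p x < r}"
    proof (intro exI[of _ "l -` {s. abv (s - 0) < r / m}"] conjI)
      show "open (l -` {s. abv (s - 0) < r / m})" by (rule open_vimage_UNIV[OF cl vf_ball_open[OF vf]])
      show "(\<lambda>_. 0, \<lambda>_. 0) \<in> l -` {s. abv (s - 0) < r / m}"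
        unfolding code_zero_eq using lin_zero[OF ll] vf_zero[OF vf] \<open>r > 0\<close> m0 by simp
      show "shape j \<inter> l -` {s. abv (s - 0) < r / m} \<subseteq> {x. p x < r}"
        unfolding p_def using m0 by (auto simp: field_simps)
    qed
  qed
  let ?N = "l -` {s. abv (s - l x0) < 1/2}"
  show "\<exists>p. code_gauge abv sE j p \<and> (\<exists>N. open N \<and> x0 \<in> N \<and>
      (\<forall>x\<in>W \<inter> N. \<forall>y\<in>W \<inter> N. q (l y - l x) \<le> p (cdiff y x) powr \<sigma>))"
  proof (intro exI conjI)
    show "code_gauge abv sE j p" by (rule cg)
    show "open ?N" by (rule open_vimage_UNIV[OF cl vf_ball_open[OF vf]])
    show "x0 \<in> ?N" using vf_zero[OF vf] by simp
    show "\<forall>x\<in>W \<inter> ?N. \<forall>y\<in>W \<inter> ?N. q (l y - l x) \<le> p (cdiff y x) powr \<sigma>"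
    proof (intro ballI)
      fix x y assume x: "x \<in> W \<inter> ?N" and y: "y \<in> W \<inter> ?N"
      define a where "a = abv (l y - l x)"
      have a0: "a \<ge> 0" unfolding a_def using A(1) by simp
      have "a \<le> abv (l y - l x0) + abv (l x0 - l x)" unfolding a_def by (rule vf_triangle[OF vf])
      moreover have "abv (l x0 - l x) = abv (l x - l x0)" by (rule vf_sym[OF vf])
      ultimately have a1: "a \<le> 1" using x y by simp
      have "a \<le> a powr \<sigma>"
      proof (cases "a = 0")
        case True then show ?thesis by simp
      next
        case False
        have "a powr 1 \<le> a powr \<sigma>" by (rule powr_mono'[OF s1 a0 a1])
        then show ?thesis using a0 False by simp
      qed
      have "q (l y - l x) = a * c" unfolding a_def by (rule hq)
      also have "\<dots> \<le> a powr \<sigma> * c" using \<open>a \<le> a powr \<sigma>\<close> c0 by (rule mult_right_mono)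
      also have "\<dots> \<le> a powr \<sigma> * (c + 1)" by (intro mult_left_mono) auto
      also have "\<dots> = (m * a) powr \<sigma>" using m0 a0 mp by (simp add: powr_mult)
      also have "m * a = p (cdiff y x)" unfolding p_def a_def cdiff_eq lin_diff[OF ll] ..
      finally show "q (l y - l x) \<le> p (cdiff y x) powr \<sigma>" .
    qed
  qed
qed

lemma BGN_lfun:
  fixes abv :: "'k::{field,topological_space} \<Rightarrow> real" and sE :: "'k \<Rightarrow> 'e::{ab_group_add,topological_space} \<Rightarrow> 'e"
  assumes vf: "valued_field abv" and s0: "0 < \<sigma>" and s1: "\<sigma> \<le> 1"
  shows "lin (cscale sE) (*) (l :: ('e,'k) code \<Rightarrow> 'k) \<Longrightarrow> continuous_on UNIV l \<Longrightarrow> BGN abv sE (*) \<sigma> k j W l"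
proof (induction k arbitrary: j W l)
  case 0
  have "continuous_on W l" using 0(2) by (rule continuous_on_subset) simp
  then show ?case using holder_lfun[OF vf 0(1,2) s0 s1] by simp
next
  case (Suc k)
  have l1: "lin (cscale sE) (*) (\<lambda>z. l (cright z))" by (rule lin_comp[OF lin_cright Suc.prems(1)])
  have c1: "continuous_on UNIV (\<lambda>z. l (cright z))" using continuous_on_compose2[OF Suc.prems(2) cont_cright] by simp
  have "continuous_on W l" using Suc.prems(2) continuous_on_subset by blast
  moreover have "holder_code abv sE (*) \<sigma> j W l" by (rule holder_lfun[OF vf Suc.prems s0 s1])
  moreover have "continuous_on (W1 sE j W) (\<lambda>z. l (cright z))" using c1 continuous_on_subset by blast
  moreover have "\<forall>x y t. x \<in> W \<longrightarrow> y \<in> shape j \<longrightarrow> t \<noteq> 0 \<longrightarrow> cadd x (cscale sE t y) \<in> W \<longrightarrow>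
           l (cright (join x y t)) = inverse t * (l (cadd x (cscale sE t y)) - l x)"
    using lin_add[OF Suc.prems(1)] lin_scale[OF Suc.prems(1)] by (simp add: cadd_eq)
  moreover have "BGN abv sE (*) \<sigma> k (Suc j) (W1 sE j W) (\<lambda>z. l (cright z))" by (rule Suc.IH[OF l1 c1])
  ultimately show ?case by (rule BGN_SucI)
qed

lemma holder_join:
  fixes abv :: "'k::{field,topological_space} \<Rightarrow> real" and sE :: "'k \<Rightarrow> 'e::{ab_group_add,topological_space} \<Rightarrow> 'e"
    and sF :: "'k \<Rightarrow> 'f::{ab_group_add,t2_space} \<Rightarrow> 'f"
    and A B :: "('e,'k) code \<Rightarrow> ('f,'k) code" and T :: "('e,'k) code \<Rightarrow> 'k"
  assumes vf: "valued_field abv" and tF: "tvs sF" and s0: "0 < \<sigma>" and Wj: "W \<subseteq> shape j"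
    and hA: "holder_code abv sE (cscale sF) \<sigma> j W A"
    and hB: "holder_code abv sE (cscale sF) \<sigma> j W B"
    and hT: "holder_code abv sE (*) \<sigma> j W T"
  shows "holder_code abv sE (cscale sF) \<sigma> j W (\<lambda>z. join (A z) (B z) (T z))"
  unfolding holder_code_def
proof (intro ballI allI impI)
  fix x0 q assume x0: "x0 \<in> W" and q: "gauge abv (cscale sF) q"
  have vsF: "vector_space sF" by (rule tvs_vs[OF tF])
  obtain q' where q': "gauge abv (cscale sF) q'" "\<forall>u v w. q (u + v + w) \<le> max (q' u) (max (q' v) (q' w))"
    using minkowski[OF vf vs_cscale[OF vsF] code_add_cont[OF vf tF] code_scale_cont[OF vf tF] q] by blast
  have cJ1: "continuous_on UNIV (\<lambda>a::('f,'k) code. join a 0 (0::'k))"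
    by (intro cont_join continuous_on_id continuous_on_const)
  have cJ2: "continuous_on UNIV (\<lambda>a::('f,'k) code. join 0 a (0::'k))"
    by (intro cont_join continuous_on_id continuous_on_const)
  have cJ3: "continuous_on UNIV (\<lambda>a::'k. join (0::('f,'k) code) 0 a)"
    by (intro cont_join continuous_on_id continuous_on_const)
  have ga: "gauge abv (cscale sF) (\<lambda>a. q' (join a 0 0))" by (rule gauge_comp[OF q'(1) lin_J1[OF vsF] cJ1])
  have gb: "gauge abv (cscale sF) (\<lambda>a. q' (join 0 a 0))" by (rule gauge_comp[OF q'(1) lin_J2[OF vsF] cJ2])
  have gc: "gauge abv (*) (\<lambda>a. q' (join 0 0 a))" by (rule gauge_comp[OF q'(1) lin_J3[OF vsF] cJ3])
  obtain pA NA where pA: "code_gauge abv sE j pA" "open NA" "x0 \<in> NA"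
    "\<forall>x\<in>W \<inter> NA. \<forall>y\<in>W \<inter> NA. q' (join (A y - A x) 0 0) \<le> pA (cdiff y x) powr \<sigma>"
    using hA x0 ga unfolding holder_code_def by blast
  obtain pB NB where pB: "code_gauge abv sE j pB" "open NB" "x0 \<in> NB"
    "\<forall>x\<in>W \<inter> NB. \<forall>y\<in>W \<inter> NB. q' (join 0 (B y - B x) 0) \<le> pB (cdiff y x) powr \<sigma>"
    using hB x0 gb unfolding holder_code_def by blast
  obtain pT NT where pT: "code_gauge abv sE j pT" "open NT" "x0 \<in> NT"
    "\<forall>x\<in>W \<inter> NT. \<forall>y\<in>W \<inter> NT. q' (join 0 0 (T y - T x)) \<le> pT (cdiff y x) powr \<sigma>"
    using hT x0 gc unfolding holder_code_def by blast
  define p where "p z = max (pA z) (max (pB z) (pT z))" for z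
  have cg: "code_gauge abv sE j p"
    unfolding code_gauge_def
  proof (intro conjI allI impI ballI)
    fix x :: "('e,'k) code" assume "x \<in> shape j"
    then show "0 \<le> p x" using pA(1) unfolding p_def code_gauge_def by (simp add: le_max_iff_disj)
  next
    fix t and x :: "('e,'k) code" assume "x \<in> shape j"
    then show "p (cscale sE t x) = abv t * p x"
      using pA(1) pB(1) pT(1) vf_props(1)[OF vf, of t] unfolding p_def code_gauge_def
      by (simp add: max_mult_distrib_left)
  next
    fix r :: real assume "r > 0"
    obtain N1 where N1: "open N1" "(\<lambda>_. 0, \<lambda>_. 0) \<in> N1" "shape j \<inter> N1 \<subseteq> {x. pA x < r}"
      using pA(1) \<open>r>0\<close> unfolding code_gauge_def by blast
    obtain N2 where N2: "open N2" "(\<lambda>_. 0, \<lambda>_. 0) \<in> N2" "shape j \<inter> N2 \<subseteq> {x. pB x < r}"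
      using pB(1) \<open>r>0\<close> unfolding code_gauge_def by blast
    obtain N3 where N3: "open N3" "(\<lambda>_. 0, \<lambda>_. 0) \<in> N3" "shape j \<inter> N3 \<subseteq> {x. pT x < r}"
      using pT(1) \<open>r>0\<close> unfolding code_gauge_def by blast
    show "\<exists>N. open N \<and> (\<lambda>_. 0, \<lambda>_. 0) \<in> N \<and> shape j \<inter> N \<subseteq> {x. p x < r}"
      using N1 N2 N3 unfolding p_def by (intro exI[of _ "N1 \<inter> N2 \<inter> N3"]) auto
  qed
  show "\<exists>p. code_gauge abv sE j p \<and> (\<exists>N. open N \<and> x0 \<in> N \<and>
      (\<forall>x\<in>W \<inter> N. \<forall>y\<in>W \<inter> N. q (join (A y) (B y) (T y) - join (A x) (B x) (T x)) \<le> p (cdiff y x) powr \<sigma>))"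
  proof (intro exI conjI)
    show "code_gauge abv sE j p" by (rule cg)
    show "open (NA \<inter> NB \<inter> NT)" using pA pB pT by auto
    show "x0 \<in> NA \<inter> NB \<inter> NT" using pA pB pT by auto
    show "\<forall>x\<in>W \<inter> (NA \<inter> NB \<inter> NT). \<forall>y\<in>W \<inter> (NA \<inter> NB \<inter> NT).
      q (join (A y) (B y) (T y) - join (A x) (B x) (T x)) \<le> p (cdiff y x) powr \<sigma>"
    proof (intro ballI)
      fix x y assume x: "x \<in> W \<inter> (NA \<inter> NB \<inter> NT)" and y: "y \<in> W \<inter> (NA \<inter> NB \<inter> NT)"
      let ?d = "cdiff y x"
      have d: "?d \<in> shape j" using x y Wj unfolding cdiff_eq by (blast intro: shape_diff)
      have nA: "0 \<le> pA ?d" using pA(1) d unfolding code_gauge_def by blast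
      have nB: "0 \<le> pB ?d" using pB(1) d unfolding code_gauge_def by blast
      have nT: "0 \<le> pT ?d" using pT(1) d unfolding code_gauge_def by blast
      have "join (A y) (B y) (T y) - join (A x) (B x) (T x) = join (A y - A x) (B y - B x) (T y - T x)"
        by (simp add: join_diff)
      also have "\<dots> = join (A y - A x) 0 0 + join 0 (B y - B x) 0 + join 0 0 (T y - T x)"
        by (rule join_split)
      finally have e: "join (A y) (B y) (T y) - join (A x) (B x) (T x) = \<dots>" .
      have "q (join (A y) (B y) (T y) - join (A x) (B x) (T x)) \<le>
        max (q' (join (A y - A x) 0 0)) (max (q' (join 0 (B y - B x) 0)) (q' (join 0 0 (T y - T x))))"
        unfolding e using q'(2) by blast
      also have "\<dots> \<le> max (pA ?d powr \<sigma>) (max (pB ?d powr \<sigma>) (pT ?d powr \<sigma>))"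
        using pA(4) pB(4) pT(4) x y by (intro max.mono) auto
      also have "\<dots> \<le> p ?d powr \<sigma>"
        unfolding p_def using nA nB nT s0
        by (intro max.boundedI powr_mono2) auto
      finally show "q (join (A y) (B y) (T y) - join (A x) (B x) (T x)) \<le> p ?d powr \<sigma>" .
    qed
  qed
qed

lemma BGN_join:
  fixes abv :: "'k::{field,topological_space} \<Rightarrow> real" and sE :: "'k \<Rightarrow> 'e::{ab_group_add,topological_space} \<Rightarrow> 'e"
    and sF :: "'k \<Rightarrow> 'f::{ab_group_add,t2_space} \<Rightarrow> 'f"
  assumes vf: "valued_field abv" and tF: "tvs sF" and s0: "0 < \<sigma>" and vsE: "vector_space sE"
  shows "W \<subseteq> shape j \<Longrightarrow> BGN abv sE (cscale sF) \<sigma> k j W (A :: ('e,'k) code \<Rightarrow> ('f,'k) code)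
    \<Longrightarrow> BGN abv sE (cscale sF) \<sigma> k j W B \<Longrightarrow> BGN abv sE (*) \<sigma> k j W (T :: ('e,'k) code \<Rightarrow> 'k)
    \<Longrightarrow> BGN abv sE (cscale sF) \<sigma> k j W (\<lambda>z. join (A z) (B z) (T z))"
proof (induction k arbitrary: j W A B T)
  case 0
  then show ?case using holder_join[OF vf tF s0] cont_join by auto
next
  case (Suc k)
  have vsF: "vector_space sF" by (rule tvs_vs[OF tF])
  from Suc.prems(2) obtain A1 where GA: "continuous_on W A" "holder_code abv sE (cscale sF) \<sigma> j W A"
    "continuous_on (W1 sE j W) A1"
    "\<forall>x y t. x \<in> W \<longrightarrow> y \<in> shape j \<longrightarrow> t \<noteq> 0 \<longrightarrow> cadd x (cscale sE t y) \<in> W \<longrightarrow>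
           A1 (join x y t) = cscale sF (inverse t) (A (cadd x (cscale sE t y)) - A x)"
    "BGN abv sE (cscale sF) \<sigma> k (Suc j) (W1 sE j W) A1"
    by (erule BGN_SucE)
  from Suc.prems(3) obtain B1 where GB: "continuous_on W B" "holder_code abv sE (cscale sF) \<sigma> j W B"
    "continuous_on (W1 sE j W) B1"
    "\<forall>x y t. x \<in> W \<longrightarrow> y \<in> shape j \<longrightarrow> t \<noteq> 0 \<longrightarrow> cadd x (cscale sE t y) \<in> W \<longrightarrow>
           B1 (join x y t) = cscale sF (inverse t) (B (cadd x (cscale sE t y)) - B x)"
    "BGN abv sE (cscale sF) \<sigma> k (Suc j) (W1 sE j W) B1"
    by (erule BGN_SucE)
  from Suc.prems(4) obtain T1 where GT: "continuous_on W T" "holder_code abv sE (*) \<sigma> j W T"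
    "continuous_on (W1 sE j W) T1"
    "\<forall>x y t. x \<in> W \<longrightarrow> y \<in> shape j \<longrightarrow> t \<noteq> 0 \<longrightarrow> cadd x (cscale sE t y) \<in> W \<longrightarrow>
           T1 (join x y t) = inverse t * (T (cadd x (cscale sE t y)) - T x)"
    "BGN abv sE (*) \<sigma> k (Suc j) (W1 sE j W) T1"
    by (erule BGN_SucE)
  have "continuous_on W (\<lambda>z. join (A z) (B z) (T z))" by (rule cont_join[OF GA(1) GB(1) GT(1)])
  moreover have "holder_code abv sE (cscale sF) \<sigma> j W (\<lambda>z. join (A z) (B z) (T z))"
    by (rule holder_join[OF vf tF s0 Suc.prems(1) GA(2) GB(2) GT(2)])
  moreover have "continuous_on (W1 sE j W) (\<lambda>z. join (A1 z) (B1 z) (T1 z))" by (rule cont_join[OF GA(3) GB(3) GT(3)])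
  moreover have "\<forall>x y t. x \<in> W \<longrightarrow> y \<in> shape j \<longrightarrow> t \<noteq> 0 \<longrightarrow> cadd x (cscale sE t y) \<in> W \<longrightarrow>
           join (A1 (join x y t)) (B1 (join x y t)) (T1 (join x y t)) = cscale sF (inverse t)
             (join (A (cadd x (cscale sE t y))) (B (cadd x (cscale sE t y))) (T (cadd x (cscale sE t y)))
              - join (A x) (B x) (T x))"
  proof (intro allI impI)
    fix x y t assume h: "x \<in> W" "y \<in> shape j" "t \<noteq> 0" "cadd x (cscale sE t y) \<in> W"
    have a: "A1 (join x y t) = cscale sF (inverse t) (A (cadd x (cscale sE t y)) - A x)" using GA(4) h by blast
    have b: "B1 (join x y t) = cscale sF (inverse t) (B (cadd x (cscale sE t y)) - B x)" using GB(4) h by blast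
    have c: "T1 (join x y t) = inverse t * (T (cadd x (cscale sE t y)) - T x)" using GT(4) h by blast
    show "join (A1 (join x y t)) (B1 (join x y t)) (T1 (join x y t)) = cscale sF (inverse t)
             (join (A (cadd x (cscale sE t y))) (B (cadd x (cscale sE t y))) (T (cadd x (cscale sE t y)))
              - join (A x) (B x) (T x))"
      unfolding a b c by (simp only: join_diff[symmetric] join_cscale[OF vsF])
  qed
  moreover have "BGN abv sE (cscale sF) \<sigma> k (Suc j) (W1 sE j W) (\<lambda>z. join (A1 z) (B1 z) (T1 z))"
    by (rule Suc.IH[OF W1_shape[OF Suc.prems(1)] GA(5) GB(5) GT(5)])
  ultimately show ?case by (rule BGN_SucI)
qed



section \<open>Composition\<close>

lemma BGN_cont: "BGN abv sE sF \<sigma> k j W G \<Longrightarrow> continuous_on W G"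
  by (cases k) simp_all

lemma cscale_zero_left: "vector_space sc \<Longrightarrow> cscale sc 0 w = 0"
  by (rule code_eqI) (simp_all add: vs)

lemma cscale_cancel: "vector_space sc \<Longrightarrow> t \<noteq> 0 \<Longrightarrow> cscale sc t (cscale sc (inverse t) D) = D"
  by (rule code_eqI) (simp_all add: vs)

lemma gauge_proj:
  fixes sF :: "'k::{field,topological_space} \<Rightarrow> 'f::{ab_group_add,topological_space} \<Rightarrow> 'f"
  assumes "code_gauge abv sF i p" "vector_space sF"
  shows "gauge abv (cscale sF) (\<lambda>z::('f,'k) code. p (proj i z))"
  unfolding gauge_def
proof (intro conjI allI impI)
  fix x :: "('f,'k) code" show "0 \<le> p (proj i x)" using assms(1) shape_proj unfolding code_gauge_def by blast
next
  fix t and x :: "('f,'k) code"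
  show "p (proj i (cscale sF t x)) = abv t * p (proj i x)"
    using assms(1) shape_proj lin_scale[OF lin_proj[OF assms(2)]] unfolding code_gauge_def by metis
next
  fix r :: real assume "r > 0"
  then obtain N where N: "open N" "0 \<in> N" "shape i \<inter> N \<subseteq> {x. p x < r}"
    using assms(1) unfolding code_gauge_def code_zero_eq by blast
  show "\<exists>N. open N \<and> 0 \<in> N \<and> N \<subseteq> {x::('f,'k) code. p (proj i x) < r}"
  proof (intro exI[of _ "proj i -` N"] conjI)
    show "open (proj i -` N)" by (rule open_vimage_UNIV[OF cont_proj N(1)])
    show "(0::('f,'k) code) \<in> proj i -` N" using N(2) lin_zero[OF lin_proj[OF assms(2)]] by simp
    show "proj i -` N \<subseteq> {x::('f,'k) code. p (proj i x) < r}" using N(3) shape_proj by blast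
  qed
qed

lemma holder_comp:
  fixes abv :: "'k::{field,topological_space} \<Rightarrow> real" and sE :: "'k \<Rightarrow> 'e::{ab_group_add,topological_space} \<Rightarrow> 'e"
    and sF :: "'k \<Rightarrow> 'f::{ab_group_add,topological_space} \<Rightarrow> 'f"
    and sH :: "'k \<Rightarrow> 'h::{ab_group_add,topological_space} \<Rightarrow> 'h"
    and \<Phi> :: "('e,'k) code \<Rightarrow> ('f,'k) code" and \<Psi> :: "('f,'k) code \<Rightarrow> 'h"
  assumes vsF: "vector_space sF" and Vi: "V \<subseteq> shape i" and PW: "\<Phi> ` W \<subseteq> V" and cP: "continuous_on W \<Phi>"
    and hP: "holder_code abv sE (cscale sF) \<sigma> j W \<Phi>" and hS: "holder_code abv sF sH \<tau> i V \<Psi>"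
    and t0: "0 < \<tau>"
  shows "holder_code abv sE sH (\<sigma> * \<tau>) j W (\<lambda>x. \<Psi> (\<Phi> x))"
  unfolding holder_code_def
proof (intro ballI allI impI)
  fix x0 q assume x0: "x0 \<in> W" and q: "gauge abv sH q"
  have "\<Phi> x0 \<in> V" using PW x0 by blast
  then obtain p N where pN: "code_gauge abv sF i p" "open N" "\<Phi> x0 \<in> N"
    "\<forall>x\<in>V \<inter> N. \<forall>y\<in>V \<inter> N. q (\<Psi> y - \<Psi> x) \<le> p (cdiff y x) powr \<tau>"
    using hS q unfolding holder_code_def by blast
  obtain pE N' where pE: "code_gauge abv sE j pE" "open N'" "x0 \<in> N'"
    "\<forall>x\<in>W \<inter> N'. \<forall>y\<in>W \<inter> N'. p (proj i (\<Phi> y - \<Phi> x)) \<le> pE (cdiff y x) powr \<sigma>"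
    using hP x0 gauge_proj[OF pN(1) vsF] unfolding holder_code_def by blast
  obtain A where A: "open A" "A \<inter> W = \<Phi> -` N \<inter> W"
    using cP pN(2) continuous_on_open_invariant by metis
  show "\<exists>p. code_gauge abv sE j p \<and> (\<exists>N. open N \<and> x0 \<in> N \<and>
      (\<forall>x\<in>W \<inter> N. \<forall>y\<in>W \<inter> N. q (\<Psi> (\<Phi> y) - \<Psi> (\<Phi> x)) \<le> p (cdiff y x) powr (\<sigma> * \<tau>)))"
  proof (intro exI conjI)
    show "code_gauge abv sE j pE" by (rule pE(1))
    show "open (N' \<inter> A)" using pE(2) A(1) by auto
    show "x0 \<in> N' \<inter> A" using pE(3) A(2) x0 pN(3) by blast
    show "\<forall>x\<in>W \<inter> (N' \<inter> A). \<forall>y\<in>W \<inter> (N' \<inter> A). q (\<Psi> (\<Phi> y) - \<Psi> (\<Phi> x)) \<le> pE (cdiff y x) powr (\<sigma> * \<tau>)"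
    proof (intro ballI)
      fix x y assume x: "x \<in> W \<inter> (N' \<inter> A)" and y: "y \<in> W \<inter> (N' \<inter> A)"
      have xV: "\<Phi> x \<in> V \<inter> N" and yV: "\<Phi> y \<in> V \<inter> N" using x y A(2) PW by blast+
      have sh: "\<Phi> y - \<Phi> x \<in> shape i" using xV yV Vi by (blast intro: shape_diff)
      have "q (\<Psi> (\<Phi> y) - \<Psi> (\<Phi> x)) \<le> p (cdiff (\<Phi> y) (\<Phi> x)) powr \<tau>" using pN(4) xV yV by blast
      also have "cdiff (\<Phi> y) (\<Phi> x) = proj i (\<Phi> y - \<Phi> x)" using proj_id[OF sh] by (simp add: cdiff_eq)
      also have "p (proj i (\<Phi> y - \<Phi> x)) powr \<tau> \<le> (pE (cdiff y x) powr \<sigma>) powr \<tau>"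
      proof -
        have n: "0 \<le> p (proj i (\<Phi> y - \<Phi> x))" using pN(1) shape_proj unfolding code_gauge_def by blast
        have le: "p (proj i (\<Phi> y - \<Phi> x)) \<le> pE (cdiff y x) powr \<sigma>" using pE(4) x y by blast
        show ?thesis by (rule powr_mono2[OF less_imp_le[OF t0] n le])
      qed
      also have "\<dots> = pE (cdiff y x) powr (\<sigma> * \<tau>)" by (simp add: powr_powr)
      finally show "q (\<Psi> (\<Phi> y) - \<Psi> (\<Phi> x)) \<le> pE (cdiff y x) powr (\<sigma> * \<tau>)" .
    qed
  qed
qed

lemma BGN_comp:
  fixes abv :: "'k::{field,topological_space} \<Rightarrow> real" and sE :: "'k \<Rightarrow> 'e::{ab_group_add,t2_space} \<Rightarrow> 'e"
    and sF :: "'k \<Rightarrow> 'f::{ab_group_add,t2_space} \<Rightarrow> 'f"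
    and sH :: "'k \<Rightarrow> 'h::{ab_group_add,t2_space} \<Rightarrow> 'h"
  assumes vf: "valued_field abv" and tE: "tvs sE" and tF: "tvs sF"
    and s0: "0 < \<sigma>" and s1: "\<sigma> \<le> 1" and t0: "0 < \<tau>"
  shows "W \<subseteq> shape j \<Longrightarrow> V \<subseteq> shape i \<Longrightarrow> \<Phi> ` W \<subseteq> V
    \<Longrightarrow> BGN abv sE (cscale sF) \<sigma> k j W (\<Phi> :: ('e,'k) code \<Rightarrow> ('f,'k) code)
    \<Longrightarrow> BGN abv sF sH \<tau> k i V (\<Psi> :: ('f,'k) code \<Rightarrow> 'h)
    \<Longrightarrow> BGN abv sE sH (\<sigma> * \<tau>) k j W (\<lambda>x. \<Psi> (\<Phi> x))"
proof (induction k arbitrary: j i W V \<Phi> \<Psi>)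
  case 0
  have vsF: "vector_space sF" by (rule tvs_vs[OF tF])
  have cP: "continuous_on W \<Phi>" and hP: "holder_code abv sE (cscale sF) \<sigma> j W \<Phi>" using 0(4) by simp_all
  have cS: "continuous_on V \<Psi>" and hS: "holder_code abv sF sH \<tau> i V \<Psi>" using 0(5) by simp_all
  show ?case using holder_comp[OF vsF 0(2,3) cP hP hS t0] continuous_on_compose2[OF cS cP 0(3)] by simp
next
  case (Suc k)
  have vsF: "vector_space sF" by (rule tvs_vs[OF tF])
  have vsE: "vector_space sE" by (rule tvs_vs[OF tE])
  from Suc.prems(4) obtain \<Phi>1 where GP: "continuous_on W \<Phi>" "holder_code abv sE (cscale sF) \<sigma> j W \<Phi>"
    "continuous_on (W1 sE j W) \<Phi>1"
    "\<forall>x y t. x \<in> W \<longrightarrow> y \<in> shape j \<longrightarrow> t \<noteq> 0 \<longrightarrow> cadd x (cscale sE t y) \<in> W \<longrightarrow>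
           \<Phi>1 (join x y t) = cscale sF (inverse t) (\<Phi> (cadd x (cscale sE t y)) - \<Phi> x)"
    "BGN abv sE (cscale sF) \<sigma> k (Suc j) (W1 sE j W) \<Phi>1"
    by (erule BGN_SucE)
  from Suc.prems(5) obtain \<Psi>1 where GS: "continuous_on V \<Psi>" "holder_code abv sF sH \<tau> i V \<Psi>"
    "continuous_on (W1 sF i V) \<Psi>1"
    "\<forall>x y t. x \<in> V \<longrightarrow> y \<in> shape i \<longrightarrow> t \<noteq> 0 \<longrightarrow> cadd x (cscale sF t y) \<in> V \<longrightarrow>
           \<Psi>1 (join x y t) = sH (inverse t) (\<Psi> (cadd x (cscale sF t y)) - \<Psi> x)"
    "BGN abv sF sH \<tau> k (Suc i) (W1 sF i V) \<Psi>1"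
    by (erule BGN_SucE)
  define \<Theta> where "\<Theta> z = join (\<Phi> (cleft z)) (proj i (\<Phi>1 z)) (snd z [])" for z
  have hW: "W1 sE j W \<subseteq> shape (Suc j)" by (rule W1_shape[OF Suc.prems(1)])
  have hV: "W1 sF i V \<subseteq> shape (Suc i)" by (rule W1_shape[OF Suc.prems(2)])
  have quot: "\<Phi>1 (join x y t) \<in> shape i \<and> \<Phi> x + cscale sF t (\<Phi>1 (join x y t)) = \<Phi> (x + cscale sE t y)"
    if "x \<in> W" "y \<in> shape j" "t \<noteq> 0" "x + cscale sE t y \<in> W" for x y t
  proof -
    have e: "\<Phi>1 (join x y t) = cscale sF (inverse t) (\<Phi> (x + cscale sE t y) - \<Phi> x)"
      using GP(4)[unfolded cadd_eq] that by blast
    have "\<Phi> (x + cscale sE t y) - \<Phi> x \<in> shape i" using that Suc.prems(2,3) by (blast intro: shape_diff)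
    then have "\<Phi>1 (join x y t) \<in> shape i" unfolding e by (rule shape_cscale[OF vsF])
    moreover have "\<Phi> x + cscale sF t (\<Phi>1 (join x y t)) = \<Phi> (x + cscale sE t y)"
      unfolding e cscale_cancel[OF vsF that(3)] by simp
    ultimately show ?thesis by blast
  qed
  have theta_join: "\<Theta> (join x y t) = join (\<Phi> x) (\<Phi>1 (join x y t)) t"
    if "x \<in> W" "y \<in> shape j" "t \<noteq> 0" "x + cscale sE t y \<in> W" for x y t
    unfolding \<Theta>_def using proj_id[of "\<Phi>1 (join x y t)" i] quot[OF that] by simp
  have hT: "\<Theta> ` W1 sE j W \<subseteq> W1 sF i V"
  proof
    fix z assume "z \<in> \<Theta> ` W1 sE j W"
    then obtain x y t where z: "z = \<Theta> (join x y t)" "x \<in> W" "y \<in> shape j" "x + cscale sE t y \<in> W"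
      using W1_mem by blast
    have PxV: "\<Phi> x \<in> V" using z(2) Suc.prems(3) by blast
    show "z \<in> W1 sF i V"
    proof (cases "t = 0")
      case True
      have "\<Phi> x + cscale sF 0 (proj i (\<Phi>1 (join x y 0))) \<in> V"
        by (simp only: cscale_zero_left[OF vsF] add_0_right PxV)
      then show ?thesis unfolding z(1) \<Theta>_def using PxV True
        by (auto intro!: W1_memI shape_proj)
    next
      case False
      then show ?thesis unfolding z(1) theta_join[OF z(2,3) False z(4)]
        using quot[OF z(2,3) False z(4)] PxV z(4) Suc.prems(3) by (auto intro!: W1_memI)
    qed
  qed
  have BA: "BGN abv sE (cscale sF) \<sigma> k (Suc j) (W1 sE j W) (\<lambda>z. \<Phi> (cleft z))"
  proof (rule BGN_pre[OF vsE lin_cleft cont_cleft])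
    show "cleft ` shape (Suc j) \<subseteq> shape j" using shape_cleft by blast
    show "cleft ` W1 sE j W \<subseteq> W" using W1_mem by fastforce
    show "BGN abv sE (cscale sF) \<sigma> k j W \<Phi>" by (rule BGN_mono[OF Suc.prems(4)])
  qed
  have BB: "BGN abv sE (cscale sF) \<sigma> k (Suc j) (W1 sE j W) (\<lambda>z. proj i (\<Phi>1 z))"
    by (rule BGN_post[OF lin_proj[OF vsF] cont_proj GP(5)])
  have BT: "BGN abv sE (*) \<sigma> k (Suc j) (W1 sE j W) (\<lambda>z. snd z [])"
    by (rule BGN_lfun[OF vf s0 s1 lin_snd_nil cont_snd_nil])
  have BTh: "BGN abv sE (cscale sF) \<sigma> k (Suc j) (W1 sE j W) \<Theta>"
    unfolding \<Theta>_def by (rule BGN_join[OF vf tF s0 vsE hW BA BB BT])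
  have IH: "BGN abv sE sH (\<sigma> * \<tau>) k (Suc j) (W1 sE j W) (\<lambda>z. \<Psi>1 (\<Theta> z))"
    by (rule Suc.IH[OF hW hV hT BTh GS(5)])
  have "continuous_on W (\<lambda>x. \<Psi> (\<Phi> x))" using continuous_on_compose2[OF GS(1) GP(1) Suc.prems(3)] .
  moreover have "holder_code abv sE sH (\<sigma> * \<tau>) j W (\<lambda>x. \<Psi> (\<Phi> x))"
    by (rule holder_comp[OF vsF Suc.prems(2,3) GP(1,2) GS(2) t0])
  moreover have "continuous_on (W1 sE j W) (\<lambda>z. \<Psi>1 (\<Theta> z))" by (rule BGN_cont[OF IH])
  moreover have "\<forall>x y t. x \<in> W \<longrightarrow> y \<in> shape j \<longrightarrow> t \<noteq> 0 \<longrightarrow> cadd x (cscale sE t y) \<in> W \<longrightarrow>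
           \<Psi>1 (\<Theta> (join x y t)) = sH (inverse t) (\<Psi> (\<Phi> (cadd x (cscale sE t y))) - \<Psi> (\<Phi> x))"
  proof (intro allI impI)
    fix x y t assume h: "x \<in> W" "y \<in> shape j" "t \<noteq> 0" "cadd x (cscale sE t y) \<in> W"
    then have h4: "x + cscale sE t y \<in> W" by (simp add: cadd_eq)
    have q: "\<Phi>1 (join x y t) \<in> shape i" "\<Phi> x + cscale sF t (\<Phi>1 (join x y t)) = \<Phi> (x + cscale sE t y)"
      using quot[OF h(1-3) h4] by blast+
    have PxV: "\<Phi> x \<in> V" "\<Phi> (x + cscale sE t y) \<in> V" using h(1) h4 Suc.prems(3) by blast+
    have "\<Psi>1 (join (\<Phi> x) (\<Phi>1 (join x y t)) t) =
        sH (inverse t) (\<Psi> (cadd (\<Phi> x) (cscale sF t (\<Phi>1 (join x y t)))) - \<Psi> (\<Phi> x))"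
      by (rule GS(4)[rule_format]) (use PxV q h(3) in \<open>auto simp: cadd_eq\<close>)
    then show "\<Psi>1 (\<Theta> (join x y t)) = sH (inverse t) (\<Psi> (\<Phi> (cadd x (cscale sE t y))) - \<Psi> (\<Phi> x))"
      unfolding theta_join[OF h(1-3) h4] using q by (simp add: cadd_eq)
  qed
  ultimately show ?case using IH by (rule BGN_SucI)
qed


lemma lift0_fst: "fst (lift0 u :: ('e::zero,'k::zero) code) [] = u"
  by (simp add: lift0_def)

theorem lemma1p33:
  fixes abv :: "'k::{field,topological_space} \<Rightarrow> real"
    and sE :: "'k \<Rightarrow> 'e::{ab_group_add,t2_space} \<Rightarrow> 'e"
    and sF :: "'k \<Rightarrow> 'f::{ab_group_add,t2_space} \<Rightarrow> 'f"
    and sH :: "'k \<Rightarrow> 'h::{ab_group_add,t2_space} \<Rightarrow> 'h"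
    and U :: "'e set" and V :: "'f set"
    and f :: "'e \<Rightarrow> 'f" and g :: "'f \<Rightarrow> 'h"
    and k :: nat and \<sigma> \<tau> :: real
  assumes "valued_field abv"
    and "tvs sE" and "tvs sF" and "tvs sH"
    and "U \<subseteq> closure (interior U)" and "V \<subseteq> closure (interior V)"
    and "0 < \<sigma>" and "\<sigma> \<le> 1" and "0 < \<tau>"
    and "f ` U \<subseteq> V"
    and "Ck_sigma_BGN abv sE sF k \<sigma> U f"
    and "Ck_sigma_BGN abv sF sH k \<tau> V g"
  shows "Ck_sigma_BGN abv sE sH k (\<sigma> * \<tau>) U (g \<circ> f)"
proof -
  have vsF: "vector_space sF" by (rule tvs_vs[OF assms(3)])
  let ?W = "(lift0 :: 'e \<Rightarrow> ('e,'k) code) ` U"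
  let ?V = "(lift0 :: 'f \<Rightarrow> ('f,'k) code) ` V"
  have f0: "BGN abv sE sF \<sigma> k 0 ?W (\<lambda>c. f (fst c []))" using assms(11) unfolding Ck_sigma_BGN_def .
  have g0: "BGN abv sF sH \<tau> k 0 ?V (\<lambda>c. g (fst c []))" using assms(12) unfolding Ck_sigma_BGN_def .
  have P: "BGN abv sE (cscale sF) \<sigma> k 0 ?W (\<lambda>c. (lift0 :: 'f \<Rightarrow> ('f,'k) code) (f (fst c [])))"
    by (rule BGN_post[OF lin_lift0[OF vsF] cont_lift0 f0])
  have Ws: "?W \<subseteq> shape 0" using lift0_shape by blast
  have Vs: "?V \<subseteq> shape 0" using lift0_shape by blast
  have img: "(\<lambda>c. (lift0 :: 'f \<Rightarrow> ('f,'k) code) (f (fst c []))) ` ?W \<subseteq> ?V"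
    using assms(10) by (auto simp: lift0_fst)
  have "BGN abv sE sH (\<sigma> * \<tau>) k 0 ?W
      (\<lambda>x. (\<lambda>c. g (fst c [])) ((\<lambda>c. (lift0 :: 'f \<Rightarrow> ('f,'k) code) (f (fst c []))) x))"
    by (rule BGN_comp[OF assms(1,2,3,7,8,9) Ws Vs img P g0])
  then show ?thesis unfolding Ck_sigma_BGN_def by (simp add: lift0_fst o_def)
qed

end
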